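(* For every integer $g\ge 3$ there exist polynomials $C_g,D_g\in\mathbb{C}[x]$ (with coefficients depending on $T$) such that $$w_{1,2}^{(g)}(x)=\frac{C_g(x)}{y(x)^{3g-2}}+\frac{D_g(x)}{y(x)^{3g-1}},$$ where $\deg C_g\le g-1$, $\deg D_g\le g$, $C_g(-x)=(-1)^{g-1}C_g(x)$, $D_g(-x)=(-1)^{g}D_g(x)$, and the coefficient of $x^{g-1}$ in $C_g$ is the negative of the coefficient of $x^{g}$ in $D_g$.
   Context: Fix $T>0$. Let $y(x)=\sqrt{x^2-4T}$ denote the branch analytic on $\mathbb{C}\setminus[-2\sqrt T,2\sqrt T]$ with $y(x)\sim x$ as $x\to\infty$; write $y_i=y(x_i)$. Let $\hbar$ be a parameter (in the application $\hbar=\sqrt{\kappa}-1/\sqrt{\kappa}$, where $\beta=2\kappa$ is the Dyson index of the Gaussian $\beta$-ensemble $\prod_{i<j}|\lambda_i-\lambda_j|^{2\kappa}e^{-\frac{N\kappa}{T}\sum_i\lambda_i^2/2}$). The functions $W_n^{(g)}(x_1,\dots,x_n)$, $n\ge1$, $g\ge0$ (the coefficients of the large-$N$ expansion of the connected correlators of that ensemble), are the symmetric functions determined recursively as follows: $W_1^{(0)}(x)=\tfrac12(x-y(x))$; by convention $W_n^{(-1)}=W_n^{(-2)}=0$; and for every $(n,g)$ with $n\ge1$, $g\ge0$, $(n,g)\neq(1,0)$, writing $I=(x_1,\dots,x_{n-1})$, $$y(x)W_n^{(g)}(x,I)=\hbar\,\partial_xW_n^{(g-1)}(x,I)+W_{n+1}^{(g-2)}(x,x,I)+{\sum_{J\subseteq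 I}}'\sum_{p=0}^{g}W_{|J|+1}^{(p)}(x,J)\,W_{n-|J|}^{(g-p)}(x,I\setminus J)+\sum_{i=1}^{n-1}\frac{\partial}{\partial x_i}\frac{W_{n-1}^{(g)}(x,I\setminus\{x_i\})-W_{n-1}^{(g)}(I)}{x-x_i},$$ where the primed double sum omits the two terms $(J=\emptyset,p=0)$ and $(J=I,p=g)$, and for $n=1$ the last sum is empty. These functions are rational in the $x_i$ and $y_i$, regular on the diagonals, and each $W_n^{(g)}$ is a polynomial in $\hbar$ of degree at most $g$ containing only powers $\hbar^j$ with $j\equiv g \pmod 2$. For $k\ge1$, $g\ge0$ and $0\le r\le g/2$, $w_{k,2r}^{(g)}(x)$ denotes the coefficient of $\hbar^{g-2r}$ in $W_k^{(g)}(x,\dots,x)$ (all $k$ arguments equal to $x$). Thus $w_{1,2}^{(g)}(x)$ is the coefficient of $\hbar^{g-2}$ in $W_1^{(g)}(x)$. *)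

theory Defs
  imports "HOL-Analysis.Analysis" "HOL-Computational_Algebra.Polynomial"
begin

definition cut :: "real \<Rightarrow> complex set" where
  "cut T = complex_of_real ` {-2 * sqrt T .. 2 * sqrt T}"

definition Ucut :: "real \<Rightarrow> complex set" where
  "Ucut T = - cut T"

(* The branch of sqrt(x^2 - 4T) analytic off the cut with y(x) ~ x at infinity:
   y(x) = x * sqrt(1 - 4T/x^2) with the principal square root. *)
definition ybr :: "real \<Rightarrow> complex \<Rightarrow> complex" where
  "ybr T x = x * csqrt (1 - 4 * complex_of_real T / x\<^sup>2)"

(* W g n j xs = coefficient of hbar^j in W_n^{(g)}(xs)  (xs a list of length n).
   loop_family T W: W satisfies the initial condition, the loop equations
   (coefficientwise in hbar, at pairwise distinct points of the domain), and is
   regular on the diagonal x_1 = x_2 (the value there is the limit). *)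
definition loop_family ::
  "real \<Rightarrow> (nat \<Rightarrow> nat \<Rightarrow> nat \<Rightarrow> complex list \<Rightarrow> complex) \<Rightarrow> bool" where
  "loop_family T W \<longleftrightarrow>
     (\<forall>x \<in> Ucut T. W 0 1 0 [x] = (x - ybr T x) / 2 \<and> (\<forall>j\<ge>1. W 0 1 j [x] = 0))
   \<and> (\<forall>g m j x I. 2 \<le> m \<longrightarrow> x \<in> Ucut T \<longrightarrow> length I = m - 2 \<longrightarrow> set I \<subseteq> Ucut T
        \<longrightarrow> distinct (x # I) \<longrightarrow>
        ((\<lambda>z. W g m j (x # z # I)) \<longlongrightarrow> W g m j (x # x # I)) (at x))
   \<and> (\<forall>g n j x I. 1 \<le> n \<longrightarrow> (n, g) \<noteq> (1, 0) \<longrightarrow> x \<in> Ucut T \<longrightarrow>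
        length I = n - 1 \<longrightarrow> set I \<subseteq> Ucut T \<longrightarrow> distinct (x # I) \<longrightarrow>
        ybr T x * W g n j (x # I) =
          (if 1 \<le> g \<and> 1 \<le> j then deriv (\<lambda>t. W (g - 1) n (j - 1) (t # I)) x else 0)
        + (if 2 \<le> g then W (g - 2) (n + 1) j (x # x # I) else 0)
        + (\<Sum>S \<in> Pow {..<n-1}. \<Sum>p \<in> {0..g}.
             if (S = {} \<and> p = 0) \<or> (S = {..<n-1} \<and> p = g) then 0
             else (\<Sum>a \<in> {0..j}. W p (card S + 1) a (x # nths I S)
                    * W (g - p) (n - card S) (j - a) (x # nths I ({..<n-1} - S))))
        + (\<Sum>i < n - 1. deriv (\<lambda>t. (W g (n - 1) j (x # nths I ({..<n-1} - {i}))
                                   - W g (n - 1) j (I[i := t])) / (x - t)) (I ! i)))"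

end

theory Submission
  imports Defs
begin

lemma zero_in_cut: "0 < T \<Longrightarrow> (0::complex) \<in> cut T"
  unfolding cut_def by (force intro: image_eqI[where x=0])

lemma Ucut_nz: "0 < T \<Longrightarrow> x \<in> Ucut T \<Longrightarrow> x \<noteq> 0"
  using zero_in_cut unfolding Ucut_def by auto

lemma open_Ucut: "open (Ucut T)"
proof -
  have "compact (cut T)" unfolding cut_def
    by (intro compact_continuous_image continuous_intros) auto
  then show ?thesis unfolding Ucut_def by (simp add: compact_imp_closed open_Compl)
qed

lemma Ucut_notnonpos:
  assumes T: "0 < T" and x: "x \<in> Ucut T"
  shows "1 - 4 * complex_of_real T / x\<^sup>2 \<notin> \<real>\<^sub>\<le>\<^sub>0"
proof
  let ?u = "1 - 4 * complex_of_real T / x\<^sup>2"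
  assume h: "?u \<in> \<real>\<^sub>\<le>\<^sub>0"
  define r where "r = Re ?u"
  have r0: "r \<le> 0" and iu: "Im ?u = 0" using h by (auto simp: complex_nonpos_Reals_iff r_def)
  have ur: "?u = complex_of_real r" using iu by (simp add: complex_eq_iff r_def)
  have x0: "x \<noteq> 0" using Ucut_nz[OF T x] .
  have "x\<^sup>2 * (1 - complex_of_real r) = 4 * complex_of_real T"
    using ur x0 by (simp add: field_simps)
  then have "x\<^sup>2 = complex_of_real (4 * T / (1 - r))"
    using r0 by (simp add: field_simps)
  then have e: "x * x = complex_of_real (4 * T / (1 - r))" by (simp add: power2_eq_square)
  have pos: "0 < 4 * T / (1 - r)" using T r0 by auto
  have eRe: "Re x * Re x - Im x * Im x = 4 * T / (1 - r)" using arg_cong[OF e, of Re] by simp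
  have eIm: "Re x * Im x + Im x * Re x = 0" using arg_cong[OF e, of Im] by simp
  have "Im x = 0"
  proof (rule ccontr)
    assume ne: "Im x \<noteq> 0"
    with eIm have "Re x = 0" by simp
    with eRe have "- (Im x * Im x) = 4 * T / (1 - r)" by simp
    moreover have "0 \<le> Im x * Im x" by simp
    ultimately show False using pos by linarith
  qed
  then have xr: "x = complex_of_real (Re x)" by (simp add: complex_eq_iff)
  have "(Re x)\<^sup>2 = 4 * T / (1 - r)" using eRe \<open>Im x = 0\<close> by (simp add: power2_eq_square)
  also have "\<dots> \<le> 4 * T" using T r0 by (simp add: divide_le_eq)
  finally have "sqrt ((Re x)\<^sup>2) \<le> sqrt (4 * T)" by (rule real_sqrt_le_mono)
  then have "\<bar>Re x\<bar> \<le> 2 * sqrt T" by (simp add: real_sqrt_mult)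
  then have "x \<in> cut T" unfolding cut_def using xr by (intro image_eqI[where x="Re x"]) auto
  with x show False unfolding Ucut_def by auto
qed

lemma ybr_sq: "0 < T \<Longrightarrow> x \<in> Ucut T \<Longrightarrow> ybr T x ^ 2 = x ^ 2 - 4 * complex_of_real T"
  using Ucut_nz[of T x] by (simp add: ybr_def power_mult_distrib field_simps)

lemma ybr_nz: assumes "0 < T" "x \<in> Ucut T" shows "ybr T x \<noteq> 0"
proof
  assume "ybr T x = 0"
  then have "1 - 4 * complex_of_real T / x\<^sup>2 = 0"
    using Ucut_nz[OF assms] by (simp add: ybr_def)
  with Ucut_notnonpos[OF assms] show False by simp
qed

lemma ybr_deriv:
  assumes T: "0 < T" and x: "x \<in> Ucut T"
  shows "(ybr T has_field_derivative x / ybr T x) (at x)"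
proof -
  have x0: "x \<noteq> 0" using Ucut_nz[OF T x] .
  define u where "u = (\<lambda>x. 1 - 4 * complex_of_real T / x\<^sup>2)"
  have nn: "u x \<notin> \<real>\<^sub>\<le>\<^sub>0" using Ucut_notnonpos[OF T x] by (simp add: u_def)
  define c where "c = csqrt (u x)"
  have c0: "c \<noteq> 0" using nn by (auto simp: c_def)
  have sq: "c * c = 1 - 4 * complex_of_real T / x\<^sup>2" unfolding c_def u_def by (metis power2_csqrt power2_eq_square)
  have du: "(u has_field_derivative 8 * complex_of_real T / x ^ 3) (at x)"
    unfolding u_def
    by (rule derivative_eq_intros refl | use x0 in \<open>simp add: field_simps power2_eq_square power3_eq_cube\<close>)+
  have dc: "((\<lambda>x. csqrt (u x)) has_field_derivative (8 * complex_of_real T / x ^ 3) / (2 * c)) (at x)"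
    unfolding c_def by (rule has_field_derivative_csqrt'[OF du nn])
  have d: "((\<lambda>x. x * csqrt (u x)) has_field_derivative (1 * c + x * ((8 * complex_of_real T / x ^ 3) / (2 * c)))) (at x)"
    using DERIV_mult[OF DERIV_ident dc] by (simp add: c_def mult.commute)
  have e: "1 * c + x * ((8 * complex_of_real T / x ^ 3) / (2 * c)) = x / ybr T x"
  proof -
    have "x / ybr T x = 1 / c" using x0 c0 by (simp add: ybr_def c_def u_def)
    moreover have "c * (c * (x * x)) = x * x - 4 * complex_of_real T"
      using sq x0 by (simp add: field_simps power2_eq_square)
    ultimately show ?thesis using x0 c0
      by (simp add: field_simps power3_eq_cube power2_eq_square)
  qed
  have "ybr T = (\<lambda>x. x * csqrt (u x))" by (simp add: ybr_def[abs_def] u_def)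
  with d e show ?thesis by simp
qed

type_synonym dat = "complex poly \<times> complex poly \<times> nat"

definition Y2 :: "real \<Rightarrow> complex poly" where "Y2 T = [:- (4 * complex_of_real T), 0, 1:]"

lemma Y2_eq: "Y2 T = [:0,1:] * [:0,1:] - [:4 * complex_of_real T:]"
  by (simp add: Y2_def)

lemma poly_Y2[simp]: "poly (Y2 T) x = x\<^sup>2 - 4 * complex_of_real T"
  by (simp add: Y2_def power2_eq_square algebra_simps)

fun Md :: "dat \<Rightarrow> nat" where "Md (A,B,M) = M"
fun mulD :: "real \<Rightarrow> dat \<Rightarrow> dat \<Rightarrow> dat" where
  "mulD T (A1,B1,M1) (A2,B2,M2) = (A1*A2 + B1*B2*Y2 T, A1*B2 + B1*A2, M1+M2)"
fun ddD :: "real \<Rightarrow> dat \<Rightarrow> dat" where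
  "ddD T (A,B,M) = (if M = 0 then (pderiv B * Y2 T + [:0,1:] * B, pderiv A, 1)
     else (pderiv A * Y2 T - smult (of_nat M) ([:0,1:] * A),
           pderiv B * Y2 T + [:0,1:] * B - smult (of_nat M) ([:0,1:] * B), M + 2))"
fun divyD :: "dat \<Rightarrow> dat" where "divyD (A,B,M) = (A,B,Suc M)"
fun raiseD :: "real \<Rightarrow> dat \<Rightarrow> dat" where "raiseD T (A,B,M) = (B * Y2 T, A, Suc M)"
fun addD :: "dat \<Rightarrow> dat \<Rightarrow> dat" where "addD (A1,B1,M1) (A2,B2,M2) = (A1+A2, B1+B2, M1)"
fun smD :: "complex \<Rightarrow> dat \<Rightarrow> dat" where "smD c (A,B,M) = (smult c A, smult c B, M)"
definition raiseTo :: "real \<Rightarrow> nat \<Rightarrow> dat \<Rightarrow> dat" where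
  "raiseTo T m X = (raiseD T ^^ (m - Md X)) X"
definition sumD :: "real \<Rightarrow> nat \<Rightarrow> dat list \<Rightarrow> dat" where
  "sumD T m xs = foldr (\<lambda>X acc. addD (raiseTo T m X) acc) xs (0,0,m)"

definition par :: "complex poly \<Rightarrow> int \<Rightarrow> bool" where
  "par p a \<longleftrightarrow> (\<forall>i. coeff p i \<noteq> 0 \<longrightarrow> even (int i + a))"

definition dle :: "complex poly \<Rightarrow> int \<Rightarrow> bool" where
  "dle p n \<longleftrightarrow> p = 0 \<or> int (degree p) \<le> n"

fun good :: "int \<Rightarrow> dat \<Rightarrow> bool" where
  "good w (A,B,M) \<longleftrightarrow> w \<le> int M \<and> dle A (int M - w) \<and> dle B (int M - w - 1)
      \<and> par A (int M - w) \<and> par B (int M - w + 1)"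

fun lam :: "int \<Rightarrow> dat \<Rightarrow> complex" where
  "lam w (A,B,M) = coeff (A + [:0,1:] * B) (nat (int M - w))"

lemma par_cong: "par p a \<Longrightarrow> even a = even b \<Longrightarrow> par p b"
  unfolding par_def by auto
lemma par_0[simp]: "par 0 a" by (simp add: par_def)
lemma par_add: assumes "par p a" "par q a" shows "par (p + q) a"
  unfolding par_def
proof (intro allI impI)
  fix i assume "coeff (p+q) i \<noteq> 0"
  then have "coeff p i \<noteq> 0 \<or> coeff q i \<noteq> 0" by auto
  then show "even (int i+a)" using assms unfolding par_def by blast
qed
lemma par_diff: assumes "par p a" "par q a" shows "par (p - q) a"
  unfolding par_def
proof (intro allI impI)
  fix i assume "coeff (p-q) i \<noteq> 0"
  then have "coeff p i \<noteq> 0 \<or> coeff q i \<noteq> 0" by auto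
  then show "even (int i+a)" using assms unfolding par_def by blast
qed
lemma par_smult: "par p a \<Longrightarrow> par (smult c p) a"
  unfolding par_def by auto
lemma par_mult: assumes "par p a" "par q b" shows "par (p * q) (a + b)"
  unfolding par_def
proof (intro allI impI)
  fix n assume "coeff (p * q) n \<noteq> 0"
  then have "(\<Sum>i\<le>n. coeff p i * coeff q (n-i)) \<noteq> 0" by (simp add: coeff_mult)
  then obtain i where i: "i \<in> {..n}" "coeff p i * coeff q (n - i) \<noteq> 0"
    by (meson sum.not_neutral_contains_not_neutral)
  with assms have "even (int i + a)" "even (int (n - i) + b)" unfolding par_def by auto
  moreover have "int (n - i) = int n - int i" using i(1) by auto
  ultimately show "even (int n + (a + b))" by presburger
qed
lemma par_pderiv: assumes "par p a" shows "par (pderiv p) (a + 1)"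
  unfolding par_def
proof (intro allI impI)
  fix n assume "coeff (pderiv p) n \<noteq> 0"
  then have "coeff p (Suc n) \<noteq> 0" by (simp add: coeff_pderiv)
  with assms have "even (int (Suc n) + a)" unfolding par_def by blast
  then show "even (int n + (a + 1))" by (simp add: algebra_simps)
qed
lemma par_X: "par [:0,1:] 1" unfolding par_def by (auto simp: coeff_pCons split: nat.splits)
lemma par_Y2: "par (Y2 T) 0" unfolding par_def Y2_def by (auto simp: coeff_pCons split: nat.splits)
lemma par_one: "par [:c:] 0" unfolding par_def by (auto simp: coeff_pCons split: nat.splits)

lemma dle_0[simp]: "dle 0 n" by (simp add: dle_def)
lemma dle_mono: "dle p a \<Longrightarrow> a \<le> b \<Longrightarrow> dle p b" unfolding dle_def by auto
lemma dle_add: assumes "dle p a" "dle q a" shows "dle (p + q) a"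
proof -
  have "degree (p + q) \<le> max (degree p) (degree q)" by (rule degree_add_le_max)
  then show ?thesis using assms unfolding dle_def
    by (cases "p = 0"; cases "q = 0") auto
qed
lemma dle_uminus: "dle p a \<Longrightarrow> dle (- p) a" unfolding dle_def by auto
lemma dle_diff: "dle p a \<Longrightarrow> dle q a \<Longrightarrow> dle (p - q) a"
  using dle_add[of p a "-q"] dle_uminus by auto
lemma dle_smult: "dle p a \<Longrightarrow> dle (smult c p) a" unfolding dle_def by auto
lemma dle_mult: assumes "dle p a" "dle q b" shows "dle (p * q) (a + b)"
proof (cases "p = 0 \<or> q = 0")
  case False
  with assms have "int (degree p) \<le> a" "int (degree q) \<le> b" by (auto simp: dle_def)
  moreover have "degree (p*q) \<le> degree p + degree q" by (rule degree_mult_le)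
  ultimately show ?thesis unfolding dle_def by linarith
qed (auto simp: dle_def)
lemma dle_pderiv: "dle p a \<Longrightarrow> dle (pderiv p) (a - 1)"
  unfolding dle_def
  by (cases "degree p = 0") (auto simp: pderiv_eq_0_iff degree_pderiv)
lemma dle_X: "dle [:0,1:] 1" by (simp add: dle_def)
lemma dle_Y2: "dle (Y2 T) 2" by (simp add: dle_def Y2_def)
lemma dle_const: "dle [:c:] 0" by (simp add: dle_def)
lemma dle_neg: "dle p a \<Longrightarrow> a < 0 \<Longrightarrow> p = 0" unfolding dle_def by auto

lemma coeff_dle: "dle p n \<Longrightarrow> n < int i \<Longrightarrow> coeff p i = 0"
  unfolding dle_def by (auto intro: coeff_eq_0)

lemma sum_single:
  assumes "finite A" "a \<in> A" "\<And>b. b \<in> A \<Longrightarrow> b \<noteq> a \<Longrightarrow> f b = 0"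
  shows "sum f A = f a"
proof -
  have "sum f A = f a + sum f (A - {a})" using assms by (simp add: sum.remove)
  also have "sum f (A - {a}) = 0" using assms by (intro sum.neutral) auto
  finally show ?thesis by simp
qed

lemma coeff_mult_top:
  assumes "dle p (int m)" "dle q (int n)"
  shows "coeff (p * q) (m + n) = coeff p m * coeff q n"
proof -
  have "coeff (p * q) (m + n) = (\<Sum>i\<le>m+n. coeff p i * coeff q (m + n - i))" by (simp add: coeff_mult)
  also have "\<dots> = coeff p m * coeff q (m + n - m)"
  proof (rule sum_single)
    fix i assume "i \<in> {..m+n}" "i \<noteq> m"
    then have "m < i \<or> n < m + n - i" by auto
    then show "coeff p i * coeff q (m + n - i) = 0"
      using coeff_dle[OF assms(1)] coeff_dle[OF assms(2)] by auto
  qed auto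
  finally show ?thesis by simp
qed

lemma dle_mono': "dle p a \<Longrightarrow> a \<le> b \<Longrightarrow> dle p b" by (rule dle_mono)

lemma good_mul:
  assumes "good w1 X" "good w2 Y" shows "good (w1 + w2) (mulD T X Y)"
proof -
  obtain A1 B1 M1 where X: "X = (A1,B1,M1)" by (cases X) auto
  obtain A2 B2 M2 where Y: "Y = (A2,B2,M2)" by (cases Y) auto
  define s1 where "s1 = int M1 - w1"
  define s2 where "s2 = int M2 - w2"
  have h1: "w1 \<le> int M1" "dle A1 s1" "dle B1 (s1 - 1)" "par A1 s1" "par B1 (s1 + 1)"
    using assms(1) by (auto simp: X s1_def)
  have h2: "w2 \<le> int M2" "dle A2 s2" "dle B2 (s2 - 1)" "par A2 s2" "par B2 (s2 + 1)"
    using assms(2) by (auto simp: Y s2_def)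
  have s: "int (M1 + M2) - (w1 + w2) = s1 + s2" by (simp add: s1_def s2_def)
  have d1: "dle (A1*A2 + B1*B2*Y2 T) (s1 + s2)"
    by (rule dle_add[OF dle_mult[OF h1(2) h2(2)] dle_mono'[OF dle_mult[OF dle_mult[OF h1(3) h2(3)] dle_Y2]]]) simp
  have d2: "dle (A1*B2 + B1*A2) (s1 + s2 - 1)"
    by (rule dle_add[OF dle_mono'[OF dle_mult[OF h1(2) h2(3)]] dle_mono'[OF dle_mult[OF h1(3) h2(2)]]]) simp_all
  have p1: "par (A1*A2 + B1*B2*Y2 T) (s1 + s2)"
    by (rule par_add[OF par_mult[OF h1(4) h2(4)] par_cong[OF par_mult[OF par_mult[OF h1(5) h2(5)] par_Y2]]]) presburger
  have p2: "par (A1*B2 + B1*A2) (s1 + s2 + 1)"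
    by (rule par_add[OF par_cong[OF par_mult[OF h1(4) h2(5)]] par_cong[OF par_mult[OF h1(5) h2(4)]]]) presburger+
  have s': "int M1 + int M2 - (w1 + w2) = s1 + s2" by (simp add: s1_def s2_def)
  show ?thesis using d1 d2 p1 p2 h1(1) h2(1) unfolding X Y by (simp add: s')
qed

lemma good_divy: "good w X \<Longrightarrow> good (w + 1) (divyD X)"
  by (cases X) (auto simp: algebra_simps)

lemma good_raise: assumes "good w X" shows "good w (raiseD T X)"
proof -
  obtain A B M where X: "X = (A,B,M)" by (cases X) auto
  define s where "s = int M - w"
  have h: "w \<le> int M" "dle A s" "dle B (s - 1)" "par A s" "par B (s + 1)"
    using assms by (auto simp: X s_def)
  have "dle (B * Y2 T) (s + 1)" by (rule dle_mono'[OF dle_mult[OF h(3) dle_Y2]]) simp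
  moreover have "par (B * Y2 T) (s + 1)" using par_mult[OF h(5) par_Y2] by simp
  moreover have "par A (s + 1 + 1)" by (rule par_cong[OF h(4)]) presburger
  ultimately show ?thesis using h unfolding X by (simp add: s_def algebra_simps)
qed

lemma good_raisen: "good w X \<Longrightarrow> good w ((raiseD T ^^ n) X)"
  by (induction n) (auto intro: good_raise)

lemma Md_raise[simp]: "Md (raiseD T X) = Suc (Md X)" by (cases X) auto
lemma Md_raisen[simp]: "Md ((raiseD T ^^ n) X) = Md X + n" by (induction n) auto
lemma Md_raiseTo: "Md X \<le> m \<Longrightarrow> Md (raiseTo T m X) = m" by (simp add: raiseTo_def)
lemma good_raiseTo: "good w X \<Longrightarrow> good w (raiseTo T m X)" by (simp add: raiseTo_def good_raisen)

lemma good_add: assumes "good w X" "good w Y" "Md X = Md Y" shows "good w (addD X Y)"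
proof -
  obtain A1 B1 M1 where X: "X = (A1,B1,M1)" by (cases X) auto
  obtain A2 B2 M2 where Y: "Y = (A2,B2,M2)" by (cases Y) auto
  show ?thesis using assms unfolding X Y by (auto intro: dle_add par_add)
qed

lemma good_sm: "good w X \<Longrightarrow> good w (smD c X)"
  by (cases X) (auto intro: dle_smult par_smult)

lemma Md_add[simp]: "Md (addD X Y) = Md X" by (cases X; cases Y) auto
lemma Md_sm[simp]: "Md (smD c X) = Md X" by (cases X) auto
lemma Md_mul[simp]: "Md (mulD T X Y) = Md X + Md Y" by (cases X; cases Y) auto
lemma Md_divy[simp]: "Md (divyD X) = Suc (Md X)" by (cases X) auto
lemma Md_dd: "Md (ddD T X) = (if Md X = 0 then 1 else Md X + 2)" by (cases X) auto
lemma Md_dd_le: "Md (ddD T X) \<le> Md X + 2" by (cases X) auto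

lemma good_dd: assumes "good w X" shows "good (w + 1) (ddD T X)"
proof -
  obtain A B M where X: "X = (A,B,M)" by (cases X) auto
  define s where "s = int M - w"
  have h: "w \<le> int M" "dle A s" "dle B (s - 1)" "par A s" "par B (s + 1)"
    using assms by (auto simp: X s_def)
  show ?thesis
  proof (cases "M = 0")
    case True
    have "dle (pderiv B * Y2 T + [:0,1:] * B) s"
      by (rule dle_add[OF dle_mono'[OF dle_mult[OF dle_pderiv[OF h(3)] dle_Y2]] dle_mono'[OF dle_mult[OF dle_X h(3)]]]) simp_all
    moreover have "dle (pderiv A) (s - 1)" by (rule dle_pderiv[OF h(2)])
    moreover have "par (pderiv B * Y2 T + [:0,1:] * B) s"
      by (rule par_add[OF par_cong[OF par_mult[OF par_pderiv[OF h(5)] par_Y2]] par_cong[OF par_mult[OF par_X h(5)]]]) presburger+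
    moreover have "par (pderiv A) (s + 1)" by (rule par_pderiv[OF h(4)])
    ultimately show ?thesis using h True unfolding X by (simp add: s_def algebra_simps)
  next
    case False
    have "dle (pderiv A * Y2 T - smult (of_nat M) ([:0,1:] * A)) (s + 1)"
      by (rule dle_diff[OF dle_mono'[OF dle_mult[OF dle_pderiv[OF h(2)] dle_Y2]] dle_smult[OF dle_mono'[OF dle_mult[OF dle_X h(2)]]]]) simp_all
    moreover have "dle (pderiv B * Y2 T + [:0,1:] * B - smult (of_nat M) ([:0,1:] * B)) s"
      by (rule dle_diff[OF dle_add[OF dle_mono'[OF dle_mult[OF dle_pderiv[OF h(3)] dle_Y2]] dle_mono'[OF dle_mult[OF dle_X h(3)]]] dle_smult[OF dle_mono'[OF dle_mult[OF dle_X h(3)]]]]) simp_all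
    moreover have "par (pderiv A * Y2 T - smult (of_nat M) ([:0,1:] * A)) (s + 1)"
      by (rule par_diff[OF par_cong[OF par_mult[OF par_pderiv[OF h(4)] par_Y2]] par_smult[OF par_cong[OF par_mult[OF par_X h(4)]]]]) presburger+
    moreover have "par (pderiv B * Y2 T + [:0,1:] * B - smult (of_nat M) ([:0,1:] * B)) (s + 2)"
      by (rule par_diff[OF par_add[OF par_cong[OF par_mult[OF par_pderiv[OF h(5)] par_Y2]] par_cong[OF par_mult[OF par_X h(5)]]] par_smult[OF par_cong[OF par_mult[OF par_X h(5)]]]]) presburger+
    ultimately show ?thesis using h False unfolding X by (simp add: s_def algebra_simps)
  qed
qed

lemma good_zero: "w \<le> int m \<Longrightarrow> good w (0, 0, m)" by simp

lemma sumD_cons: "sumD T m (X # xs) = addD (raiseTo T m X) (sumD T m xs)"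
  by (simp add: sumD_def)
lemma sumD_nil: "sumD T m [] = (0,0,m)" by (simp add: sumD_def)

lemma Md_sumD: "(\<And>X. X \<in> set xs \<Longrightarrow> Md X \<le> m) \<Longrightarrow> Md (sumD T m xs) = m"
  by (cases xs) (auto simp: sumD_nil sumD_cons Md_raiseTo)

lemma good_sumD: "(\<And>X. X \<in> set xs \<Longrightarrow> good w X \<and> Md X \<le> m) \<Longrightarrow> w \<le> int m \<Longrightarrow> good w (sumD T m xs)"
proof (induction xs)
  case Nil then show ?case by (simp add: sumD_nil)
next
  case (Cons X xs)
  then show ?case unfolding sumD_cons
    by (intro good_add good_raiseTo) (auto simp: Md_raiseTo Md_sumD)
qed

lemma lam_mul: assumes "good w1 X" "good w2 Y" shows "lam (w1 + w2) (mulD T X Y) = lam w1 X * lam w2 Y"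
proof -
  obtain A1 B1 M1 where X: "X = (A1,B1,M1)" by (cases X) auto
  obtain A2 B2 M2 where Y: "Y = (A2,B2,M2)" by (cases Y) auto
  define s1 where "s1 = int M1 - w1"
  define s2 where "s2 = int M2 - w2"
  have h1: "w1 \<le> int M1" "dle A1 s1" "dle B1 (s1 - 1)"
    using assms(1) by (auto simp: X s1_def)
  have h2: "w2 \<le> int M2" "dle A2 s2" "dle B2 (s2 - 1)"
    using assms(2) by (auto simp: Y s2_def)
  define n1 where "n1 = nat s1"
  define n2 where "n2 = nat s2"
  have n: "s1 = int n1" "s2 = int n2" using h1(1) h2(1) by (auto simp: n1_def n2_def s1_def s2_def)
  have e: "A1 * A2 + B1 * B2 * Y2 T + [:0,1:] * (A1 * B2 + B1 * A2)
       = (A1 + [:0,1:] * B1) * (A2 + [:0,1:] * B2) - smult (4 * complex_of_real T) (B1 * B2)"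
    by (simp add: Y2_eq algebra_simps)
  have P1: "dle (A1 + [:0,1:] * B1) (int n1)"
    using dle_add[OF h1(2) dle_mono'[OF dle_mult[OF dle_X h1(3)]]] n by simp
  have P2: "dle (A2 + [:0,1:] * B2) (int n2)"
    using dle_add[OF h2(2) dle_mono'[OF dle_mult[OF dle_X h2(3)]]] n by simp
  have B: "coeff (B1 * B2) (n1 + n2) = 0"
    by (rule coeff_dle[OF dle_mult[OF h1(3) h2(3)]]) (use n in simp)
  have idx: "nat (int (M1 + M2) - (w1 + w2)) = n1 + n2" using n by (simp add: s1_def s2_def)
  show ?thesis unfolding X Y using n
    by (simp only: mulD.simps lam.simps idx e coeff_diff coeff_smult B coeff_mult_top[OF P1 P2])
       (simp add: s1_def s2_def)
qed

lemma lam_divy: "lam (w + 1) (divyD X) = lam w X" by (cases X) (simp add: algebra_simps)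

lemma lam_raise: assumes "good w X" shows "lam w (raiseD T X) = lam w X"
proof -
  obtain A B M where X: "X = (A,B,M)" by (cases X) auto
  define s where "s = int M - w"
  have h: "w \<le> int M" "dle A s" "dle B (s - 1)" using assms by (auto simp: X s_def)
  define n where "n = nat s"
  have ns: "s = int n" using h(1) by (simp add: n_def s_def)
  have e: "B * Y2 T + [:0,1:] * A = [:0,1:] * (A + [:0,1:] * B) - smult (4 * complex_of_real T) B"
    by (simp add: Y2_eq algebra_simps)
  have idx: "nat (int (Suc M) - w) = Suc n" using ns by (simp add: s_def)
  have idx2: "nat (int M - w) = n" using ns by (simp add: s_def)
  have "coeff B (Suc n) = 0" by (rule coeff_dle[OF h(3)]) (simp add: ns)
  then show ?thesis unfolding X raiseD.simps lam.simps idx idx2 e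
    by (simp add: coeff_diff coeff_pCons_Suc)
qed
  
lemma lam_raisen: "good w X \<Longrightarrow> lam w ((raiseD T ^^ n) X) = lam w X"
  by (induction n) (auto simp: lam_raise good_raisen)
lemma lam_raiseTo: "good w X \<Longrightarrow> lam w (raiseTo T m X) = lam w X"
  by (simp add: raiseTo_def lam_raisen)

lemma lam_add: "Md X = Md Y \<Longrightarrow> lam w (addD X Y) = lam w X + lam w Y"
  by (cases X; cases Y) (simp add: algebra_simps coeff_pCons split: nat.split)
lemma lam_sm: "lam w (smD c X) = c * lam w X" by (cases X) (simp add: algebra_simps coeff_pCons split: nat.split)

lemma lam_sumD: "(\<And>X. X \<in> set xs \<Longrightarrow> good w X \<and> Md X \<le> m) \<Longrightarrow> lam w (sumD T m xs) = (\<Sum>X\<leftarrow>xs. lam w X)"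
proof (induction xs)
  case Nil then show ?case by (simp add: sumD_nil)
next
  case (Cons X xs)
  then show ?case unfolding sumD_cons
    by (subst lam_add) (auto simp: Md_raiseTo Md_sumD lam_raiseTo)
qed

lemma dle_top0: assumes "dle P (int n)" "coeff P n = 0" shows "dle P (int n - 1)"
proof (cases "P = 0")
  case False
  then have "degree P \<le> n" using assms(1) by (auto simp: dle_def)
  moreover have "degree P \<noteq> n" using assms(2) False by (metis leading_coeff_0_iff)
  ultimately show ?thesis by (auto simp: dle_def)
qed simp

lemma lam_dd: assumes "good w X" "lam w X = 0" shows "lam (w + 1) (ddD T X) = 0"
proof -
  obtain A B M where X: "X = (A,B,M)" by (cases X) auto
  define s where "s = int M - w"
  have h: "w \<le> int M" "dle A s" "dle B (s - 1)" using assms by (auto simp: X s_def)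
  define n where "n = nat s"
  have ns: "s = int n" using h(1) by (simp add: n_def s_def)
  define P where "P = A + [:0,1:] * B"
  have dP: "dle P (int n)" unfolding P_def using dle_add[OF h(2) dle_mono'[OF dle_mult[OF dle_X h(3)]]] ns by simp
  have cP: "coeff P n = 0" using assms(2) by (simp add: X P_def n_def s_def)
  have dP1: "dle P (int n - 1)" by (rule dle_top0[OF dP cP])
  have pdP: "pderiv P = pderiv A + B + [:0,1:] * pderiv B"
    unfolding P_def by (simp add: pderiv_add pderiv_mult pderiv_pCons algebra_simps)
  show ?thesis
  proof (cases "M = 0")
    case True
    have e: "pderiv B * Y2 T + [:0,1:] * B + [:0,1:] * pderiv A
           = [:0,1:] * pderiv P - smult (4 * complex_of_real T) (pderiv B)"
      by (simp add: pdP Y2_eq algebra_simps)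
    have d: "dle ([:0,1:] * pderiv P - smult (4 * complex_of_real T) (pderiv B)) (int n - 1)"
      by (rule dle_diff[OF dle_mono'[OF dle_mult[OF dle_X dle_pderiv[OF dP1]]] dle_smult[OF dle_mono'[OF dle_pderiv[OF h(3)]]]]) (simp_all add: ns)
    have idx: "nat (int 1 - (w + 1)) = n" using True by (simp add: n_def s_def)
    have dd: "ddD T X = (pderiv B * Y2 T + [:0,1:] * B, pderiv A, 1)" using True by (simp add: X)
    show ?thesis unfolding dd lam.simps idx e by (rule coeff_dle[OF d]) simp
  next
    case False
    have e: "pderiv A * Y2 T - smult (of_nat M) ([:0,1:] * A) + [:0,1:] * (pderiv B * Y2 T + [:0,1:] * B - smult (of_nat M) ([:0,1:] * B))
           = Y2 T * pderiv P + smult (4 * complex_of_real T) B - smult (of_nat M) ([:0,1:] * P)"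
    proof -
      have e0: "\<And>X C K :: complex poly. pderiv A * (X*X - C) - K*(X*A) + X*(pderiv B*(X*X - C) + X*B - K*(X*B))
          = (X*X - C)*(pderiv A + B + X*pderiv B) + C*B - K*(X*(A + X*B))"
        by (simp add: algebra_simps)
      show ?thesis using e0[of "[:0,1:]" "[:4 * complex_of_real T:]" "[:of_nat M:]"]
        unfolding pdP unfolding P_def Y2_eq by simp
    qed
    have d: "dle (Y2 T * pderiv P + smult (4 * complex_of_real T) B - smult (of_nat M) ([:0,1:] * P)) (int n)"
      by (rule dle_diff[OF dle_add[OF dle_mono'[OF dle_mult[OF dle_Y2 dle_pderiv[OF dP1]]] dle_smult[OF dle_mono'[OF h(3)]]] dle_smult[OF dle_mono'[OF dle_mult[OF dle_X dP1]]]]) (simp_all add: ns)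
    have idx: "nat (int (M + 2) - (w + 1)) = Suc n" using False ns h(1) by (simp add: n_def s_def nat_add_distrib)
    have dd: "ddD T X = (pderiv A * Y2 T - smult (of_nat M) ([:0,1:] * A),
           pderiv B * Y2 T + [:0,1:] * B - smult (of_nat M) ([:0,1:] * B), M + 2)" using False by (simp add: X)
    show ?thesis unfolding dd lam.simps idx e by (rule coeff_dle[OF d]) simp
  qed
qed

fun ev :: "real \<Rightarrow> dat \<Rightarrow> complex \<Rightarrow> complex" where
  "ev T (A,B,M) x = (poly A x + poly B x * ybr T x) / ybr T x ^ M"

context fixes T :: real and x :: complex assumes T: "0 < T" and x: "x \<in> Ucut T"
begin

lemma Y2y: "poly (Y2 T) x = ybr T x ^ 2" using ybr_sq[OF T x] by simp

lemma ev_mul: "ev T (mulD T X Y) x = ev T X x * ev T Y x"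
proof -
  obtain A1 B1 M1 where X: "X = (A1,B1,M1)" by (cases X) auto
  obtain A2 B2 M2 where Y: "Y = (A2,B2,M2)" by (cases Y) auto
  have y0: "ybr T x \<noteq> 0" using ybr_nz[OF T x] .
  show ?thesis unfolding X Y using y0
    by (simp del: poly_Y2 add: Y2y power_add field_simps power2_eq_square)
qed

lemma ev_divy: "ev T (divyD X) x = ev T X x / ybr T x"
  using ybr_nz[OF T x] by (cases X) (simp add: field_simps)

lemma ev_raise: "ev T (raiseD T X) x = ev T X x"
proof -
  obtain A B M where X: "X = (A,B,M)" by (cases X) auto
  have y0: "ybr T x \<noteq> 0" using ybr_nz[OF T x] .
  show ?thesis unfolding X using y0 by (simp del: poly_Y2 add: Y2y field_simps power2_eq_square)
qed

lemma ev_raisen: "ev T ((raiseD T ^^ n) X) x = ev T X x"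
  by (induction n) (auto simp: ev_raise)
lemma ev_raiseTo: "ev T (raiseTo T m X) x = ev T X x"
  by (simp add: raiseTo_def ev_raisen)
lemma ev_add: "Md X = Md Y \<Longrightarrow> ev T (addD X Y) x = ev T X x + ev T Y x"
  by (cases X; cases Y) (simp add: field_simps add_divide_distrib)
lemma ev_sm: "ev T (smD c X) x = c * ev T X x"
  by (cases X) (simp add: field_simps)
lemma ev_sumD: "(\<And>X. X \<in> set xs \<Longrightarrow> Md X \<le> m) \<Longrightarrow> ev T (sumD T m xs) x = (\<Sum>X\<leftarrow>xs. ev T X x)"
proof (induction xs)
  case Nil then show ?case by (simp add: sumD_nil)
next
  case (Cons X xs)
  then show ?case unfolding sumD_cons
    by (subst ev_add) (auto simp: Md_raiseTo Md_sumD ev_raiseTo)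
qed

lemma ev_deriv: "(ev T X has_field_derivative ev T (ddD T X) x) (at x)"
proof -
  obtain A B M where X: "X = (A,B,M)" by (cases X) auto
  define y where "y = ybr T x"
  have y0: "y \<noteq> 0" using ybr_nz[OF T x] by (simp add: y_def)
  have dy: "(ybr T has_field_derivative x / y) (at x)" using ybr_deriv[OF T x] by (simp add: y_def)
  have dN: "((\<lambda>t. poly A t + poly B t * ybr T t) has_field_derivative
      (poly (pderiv A) x + (poly (pderiv B) x * y + poly B x * (x / y)))) (at x)"
    using DERIV_add[OF poly_DERIV[of A x] DERIV_mult[OF poly_DERIV[of B x] ybr_deriv[OF T x]]]
    by (simp add: y_def mult.commute)
  have dq: "((\<lambda>t. ybr T t ^ M) has_field_derivative (of_nat M * y ^ (M - 1) * (x / y))) (at x)"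
    using DERIV_power[OF ybr_deriv[OF T x], of M] by (simp add: y_def mult_ac)
  have d: "((\<lambda>t. (poly A t + poly B t * ybr T t) / ybr T t ^ M) has_field_derivative
     ((poly (pderiv A) x + (poly (pderiv B) x * y + poly B x * (x / y))) * y ^ M
       - (poly A x + poly B x * y) * (of_nat M * y ^ (M - 1) * (x / y))) / (y ^ M * y ^ M)) (at x)"
    using DERIV_divide[OF dN dq] y0 by (simp add: y_def)
  have Y2': "poly (Y2 T) x = y ^ 2" using Y2y by (simp add: y_def)
  have eq: "((poly (pderiv A) x + (poly (pderiv B) x * y + poly B x * (x / y))) * y ^ M
       - (poly A x + poly B x * y) * (of_nat M * y ^ (M - 1) * (x / y))) / (y ^ M * y ^ M)
      = ev T (ddD T X) x"
  proof (cases M)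
    case 0
    then show ?thesis unfolding X using y0
      by (simp del: poly_Y2 add: Y2' y_def[symmetric] field_simps power2_eq_square)
  next
    case (Suc m)
    then show ?thesis unfolding X using y0
      by (simp del: poly_Y2 add: Y2' y_def[symmetric] field_simps power2_eq_square)
  qed
  have "ev T X = (\<lambda>t. (poly A t + poly B t * ybr T t) / ybr T t ^ M)" by (simp add: X fun_eq_iff)
  with d eq show ?thesis by simp
qed

end

lemma ev_eq_deriv:
  assumes T: "0 < T" and x: "x \<in> Ucut T" and f: "\<And>t. t \<in> Ucut T \<Longrightarrow> f t = ev T X t"
  shows "deriv f x = ev T (ddD T X) x"
proof -
  have "eventually (\<lambda>t. f t = ev T X t) (nhds x)"
    using open_Ucut x f by (auto simp: eventually_nhds)
  then have "deriv f x = deriv (ev T X) x" by (rule deriv_cong_ev) simp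
  also have "\<dots> = ev T (ddD T X) x" by (rule DERIV_imp_deriv[OF ev_deriv[OF T x]])
  finally show ?thesis .
qed

abbreviation ddn :: "real \<Rightarrow> nat \<Rightarrow> dat \<Rightarrow> dat" where "ddn T k \<equiv> ddD T ^^ k"

fun Tf :: "real \<Rightarrow> dat \<Rightarrow> nat \<Rightarrow> complex \<Rightarrow> complex \<Rightarrow> complex" where
  "Tf T F 0 x z = ev T F x"
| "Tf T F (Suc k) x z = (Tf T F k x z - ev T (ddn T k F) z / fact k) / (x - z)"

lemma ddn_dd: "ddn T k (ddD T F) = ddn T (Suc k) F"
  by (simp add: funpow_Suc_right del: funpow.simps)

lemma Tf_alg:
  fixes b u v d K :: complex
  assumes "d \<noteq> 0" "K + 1 \<noteq> 0"
  shows "((b - K * u) * d - (u * d) * 1) / (d * d) = (b - v) / d - (K + 1) * ((u - v / (K + 1)) / d)"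
proof -
  have a: "(K + 1) * v / (K + 1) = v" using assms by simp
  have b: "(K + 1) * ((u - v / (K + 1)) / d) = ((K + 1) * u - v) / d"
    by (simp only: times_divide_eq_right right_diff_distrib a)
  show ?thesis unfolding b using assms by (simp add: field_simps)
qed

lemma Tf_deriv:
  assumes T: "0 < T" and x: "x \<in> Ucut T" and xz: "x \<noteq> z"
  shows "((\<lambda>t. Tf T F k t z) has_field_derivative
           (Tf T (ddD T F) k x z - of_nat k * Tf T F (Suc k) x z)) (at x)"
proof (induction k arbitrary: F)
  case 0
  then show ?case using ev_deriv[OF T x] by simp
next
  case (Suc k)
  define c where "c = ev T (ddn T k F) z / fact k"
  have d: "((\<lambda>t. (Tf T F k t z - c) / (t - z)) has_field_derivative
      ((Tf T (ddD T F) k x z - of_nat k * Tf T F (Suc k) x z) * (x - z) - (Tf T F k x z - c) * 1) / ((x - z) * (x - z))) (at x)"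
    using DERIV_divide[OF DERIV_diff[OF Suc.IH DERIV_const[of c]] DERIV_diff[OF DERIV_ident DERIV_const[of z]]] xz
    by simp
  have e: "((Tf T (ddD T F) k x z - of_nat k * Tf T F (Suc k) x z) * (x - z) - (Tf T F k x z - c) * 1) / ((x - z) * (x - z))
     = Tf T (ddD T F) (Suc k) x z - of_nat (Suc k) * Tf T F (Suc (Suc k)) x z"
  proof -
    have K: "of_nat k + 1 \<noteq> (0::complex)" using of_nat_neq_0[of k, where 'a=complex] by (simp add: add.commute)
    have "((Tf T (ddD T F) k x z - of_nat k * ((Tf T F k x z - c) / (x - z))) * (x - z) - (Tf T F k x z - c) * 1) / ((x - z) * (x - z))
      = (Tf T (ddD T F) k x z - ev T (ddn T (Suc k) F) z / fact k) / (x - z)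
        - (of_nat k + 1) * (((Tf T F k x z - c) / (x - z) - ev T (ddn T (Suc k) F) z / ((of_nat k + 1) * fact k)) / (x - z))"
      using Tf_alg[of "x - z" "of_nat k" "Tf T (ddD T F) k x z" "(Tf T F k x z - c) / (x - z)" "ev T (ddn T (Suc k) F) z / fact k"] xz K
      by (simp add: mult.commute)
    then show ?thesis by (simp add: c_def ddn_dd algebra_simps)
  qed
  show ?case using d unfolding e by (simp add: c_def)
qed

lemma Tf_closed:
  assumes "x \<noteq> z"
  shows "Tf T F k x z = (ev T F x - (\<Sum>i<k. ev T (ddn T i F) z * (x - z) ^ i / fact i)) / (x - z) ^ k"
proof (induction k)
  case 0 then show ?case by simp
next
  case (Suc k)
  have xz: "x - z \<noteq> 0" using assms by simp
  show ?case by (simp only: Tf.simps Suc.IH) (use xz in \<open>simp add: field_simps\<close>)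
qed

lemma Tf_lim:
  assumes T: "0 < T" and x: "x \<in> Ucut T"
  shows "((\<lambda>z. Tf T F k x z) \<longlongrightarrow> ev T (ddn T k F) x / fact k) (at x)"
proof -
  obtain r where r: "0 < r" "cball x r \<subseteq> Ucut T"
    using open_Ucut[unfolded open_contains_cball] x by blast
  define S where "S = cball x r"
  define f where "f = (\<lambda>i. ev T (ddn T i F))"
  have fd: "(f i has_field_derivative f (Suc i) t) (at t within S)" if "t \<in> S" for i t
  proof -
    have "t \<in> Ucut T" using that r by (auto simp: S_def)
    from ev_deriv[OF T this, of "ddn T i F"]
    show ?thesis by (simp add: f_def has_field_derivative_at_within)
  qed
  have cont: "continuous_on S (f (Suc k))"
    by (rule DERIV_continuous_on[OF fd])
  have "compact (f (Suc k) ` S)" by (rule compact_continuous_image[OF cont]) (simp add: S_def)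
  then have "bounded (f (Suc k) ` S)" by (rule compact_imp_bounded)
  then obtain B where B0: "\<forall>y\<in>f (Suc k) ` S. norm y \<le> B" unfolding bounded_iff by blast
  have B: "cmod (f (Suc k) t) \<le> B" if "t \<in> S" for t using B0 that by blast
  have bound: "cmod (Tf T F k x z - f k z / fact k) \<le> B * cmod (x - z) / fact k"
    if z: "z \<in> S" "z \<noteq> x" for z
  proof -
    have tay: "cmod (f 0 x - (\<Sum>i\<le>k. f i z * (x - z) ^ i / fact i)) \<le> B * cmod (x - z) ^ Suc k / fact k"
      by (rule complex_Taylor[of S k f B z x]) (use fd B z r(1) in \<open>auto simp: S_def\<close>)
    have xz: "x - z \<noteq> 0" using z by simp
    have "Tf T F k x z - f k z / fact k = (f 0 x - (\<Sum>i\<le>k. f i z * (x - z) ^ i / fact i)) / (x - z) ^ k"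
      using xz by (simp add: Tf_closed lessThan_Suc_atMost[symmetric] f_def field_simps)
    then have "cmod (Tf T F k x z - f k z / fact k) = cmod (f 0 x - (\<Sum>i\<le>k. f i z * (x - z) ^ i / fact i)) / cmod (x - z) ^ k"
      by (simp add: norm_divide norm_power)
    also have "\<dots> \<le> (B * cmod (x - z) ^ Suc k / fact k) / cmod (x - z) ^ k"
      by (rule divide_right_mono[OF tay]) simp
    also have "\<dots> = B * cmod (x - z) / fact k" using xz by (simp add: field_simps)
    finally show ?thesis .
  qed
  have ev1: "eventually (\<lambda>z. cmod (Tf T F k x z - f k z / fact k) \<le> B * cmod (x - z) / fact k) (at x)"
    unfolding eventually_at using r(1) bound by (intro exI[of _ r]) (auto simp: S_def dist_commute)
  have lim0: "((\<lambda>z. B * cmod (x - z) / fact k) \<longlongrightarrow> 0) (at x)"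
  proof -
    have "((\<lambda>z. B * cmod (x - z) / fact k) \<longlongrightarrow> B * cmod (x - x) / fact k) (at x)"
      by (intro tendsto_intros) simp
    then show ?thesis by simp
  qed
  have l1: "((\<lambda>z. Tf T F k x z - f k z / fact k) \<longlongrightarrow> 0) (at x)"
    by (rule Lim_null_comparison[OF ev1 lim0])
  have l2: "((\<lambda>z. f k z / fact k) \<longlongrightarrow> f k x / fact k) (at x)"
  proof -
    have "isCont (f k) x" unfolding f_def using ev_deriv[OF T x] by (rule DERIV_isCont)
    then have "(f k \<longlongrightarrow> f k x) (at x)" by (simp add: isCont_def)
    then show ?thesis by (rule tendsto_divide[OF _ tendsto_const]) simp
  qed
  have "((\<lambda>z. (Tf T F k x z - f k z / fact k) + f k z / fact k) \<longlongrightarrow> 0 + f k x / fact k) (at x)"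
    by (rule tendsto_add[OF l1 l2])
  then show ?thesis by (simp add: f_def)
qed

lemma src_deriv:
  assumes T: "0 < T" and x: "x \<in> Ucut T" and z: "z \<in> Ucut T" and xz: "x \<noteq> z"
      and f: "\<And>t. t \<in> Ucut T \<Longrightarrow> f t = ev T F t"
  shows "deriv (\<lambda>t. (f x - f t) / (x - t)) z = Tf T F 2 x z"
proof -
  have "eventually (\<lambda>t. (f x - f t) / (x - t) = (ev T F x - ev T F t) / (x - t)) (nhds z)"
    using open_Ucut z f x by (auto simp: eventually_nhds)
  then have "deriv (\<lambda>t. (f x - f t) / (x - t)) z = deriv (\<lambda>t. (ev T F x - ev T F t) / (x - t)) z"
    by (rule deriv_cong_ev) simp
  also have "\<dots> = ((0 - ev T (ddD T F) z) * (x - z) - (ev T F x - ev T F z) * (0 - 1)) / ((x - z) * (x - z))"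
    by (rule DERIV_imp_deriv, rule DERIV_divide[OF DERIV_diff[OF DERIV_const ev_deriv[OF T z]] DERIV_diff[OF DERIV_const DERIV_ident]])
       (use xz in simp)
  also have "\<dots> = Tf T F 2 x z" using xz by (simp add: numeral_2_eq_2 field_simps)
  finally show ?thesis .
qed

definition RHS :: "real \<Rightarrow> (nat \<Rightarrow> nat \<Rightarrow> nat \<Rightarrow> complex list \<Rightarrow> complex) \<Rightarrow> nat \<Rightarrow> nat \<Rightarrow> nat \<Rightarrow> complex \<Rightarrow> complex list \<Rightarrow> complex" where
 "RHS T W g n j x I =
          (if 1 \<le> g \<and> 1 \<le> j then deriv (\<lambda>t. W (g - 1) n (j - 1) (t # I)) x else 0)
        + (if 2 \<le> g then W (g - 2) (n + 1) j (x # x # I) else 0)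
        + (\<Sum>S \<in> Pow {..<n-1}. \<Sum>p \<in> {0..g}.
             if (S = {} \<and> p = 0) \<or> (S = {..<n-1} \<and> p = g) then 0
             else (\<Sum>a \<in> {0..j}. W p (card S + 1) a (x # nths I S)
                    * W (g - p) (n - card S) (j - a) (x # nths I ({..<n-1} - S))))
        + (\<Sum>i < n - 1. deriv (\<lambda>t. (W g (n - 1) j (x # nths I ({..<n-1} - {i}))
                                   - W g (n - 1) j (I[i := t])) / (x - t)) (I ! i))"

lemma LF_base: assumes "loop_family T W" "x \<in> Ucut T" shows "W 0 1 0 [x] = (x - ybr T x) / 2"
proof -
  note H = assms(1)[unfolded loop_family_def, THEN conjunct1]
  show ?thesis using H assms(2) by blast
qed
lemma LF_base0: assumes "loop_family T W" "x \<in> Ucut T" "1 \<le> j" shows "W 0 1 j [x] = 0"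
proof -
  note H = assms(1)[unfolded loop_family_def, THEN conjunct1]
  show ?thesis using H assms(2,3) by blast
qed
lemma LF_lim: assumes "loop_family T W" "2 \<le> m" "x \<in> Ucut T" "length I = m - 2" "set I \<subseteq> Ucut T"
        "distinct (x # I)" shows "((\<lambda>z. W g m j (x # z # I)) \<longlongrightarrow> W g m j (x # x # I)) (at x)"
proof -
  note H = assms(1)[unfolded loop_family_def, THEN conjunct2, THEN conjunct1]
  show ?thesis by (rule H[rule_format]) (rule assms)+
qed
lemma LF_loop: assumes "loop_family T W" "1 \<le> n" "(n, g) \<noteq> (1, 0)" "x \<in> Ucut T"
        "length I = n - 1" "set I \<subseteq> Ucut T" "distinct (x # I)"
      shows "ybr T x * W g n j (x # I) = RHS T W g n j x I"
proof -
  note H = assms(1)[unfolded loop_family_def, THEN conjunct2, THEN conjunct2]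
  show ?thesis unfolding RHS_def by (rule H[rule_format]) (rule assms)+
qed

lemma deriv_zero_near:
  assumes "open U" "x \<in> U" "\<And>t. t \<in> U \<Longrightarrow> f t = 0"
  shows "deriv f x = 0"
proof -
  have "eventually (\<lambda>t. f t = (\<lambda>_. 0) t) (nhds x)" using assms by (auto simp: eventually_nhds)
  then have "deriv f x = deriv (\<lambda>_. 0) x" by (rule deriv_cong_ev) simp
  then show ?thesis by simp
qed

lemma lim_zero_near:
  fixes x :: complex
  assumes "(f \<longlongrightarrow> L) (at x)" "open U" "x \<in> U" "\<And>t. t \<in> U \<Longrightarrow> t \<noteq> x \<Longrightarrow> f t = 0"
  shows "L = (0::complex)"
proof -
  have "eventually (\<lambda>t. f t = 0) (at x)"
    using assms(2-4) unfolding eventually_at_topological by blast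
  then have "(f \<longlongrightarrow> 0) (at x)" by (rule tendsto_eventually)
  with assms(1) show ?thesis by (rule tendsto_unique[rotated]) simp
qed

lemma length_nths_sub: "S \<subseteq> {..<length I} \<Longrightarrow> length (nths I S) = card S"
proof -
  assume "S \<subseteq> {..<length I}"
  then have "{i. i < length I \<and> i \<in> S} = S" by auto
  then show ?thesis by (simp add: length_nths)
qed

lemma open_minus_finite: "open U \<Longrightarrow> finite F \<Longrightarrow> open (U - (F::complex set))"
  by (simp add: open_Diff finite_imp_closed)

definition Zc :: "nat \<Rightarrow> nat \<Rightarrow> bool" where "Zc g j \<longleftrightarrow> g < j \<or> odd (g + j)"

lemma Zc_split: "Zc g j \<Longrightarrow> a \<le> j \<Longrightarrow> p \<le> g \<Longrightarrow> Zc p a \<or> Zc (g - p) (j - a)"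
  unfolding Zc_def by presburger

context fixes T :: real and W assumes T: "0 < T" and LF: "loop_family T W"
begin

definition PV where "PV g n \<longleftrightarrow> (\<forall>j x I. length I = n - 1 \<longrightarrow> x \<in> Ucut T \<longrightarrow> set I \<subseteq> Ucut T
     \<longrightarrow> distinct (x # I) \<longrightarrow> Zc g j \<longrightarrow> W g n j (x # I) = 0)"

lemma PV_list: "PV g n \<Longrightarrow> 1 \<le> n \<Longrightarrow> length xs = n \<Longrightarrow> set xs \<subseteq> Ucut T \<Longrightarrow> distinct xs \<Longrightarrow> Zc g j
   \<Longrightarrow> W g n j xs = 0"
  unfolding PV_def by (cases xs) auto

lemma vanish_step:
  assumes IHg: "\<And>g' n'. g' < g \<Longrightarrow> 1 \<le> n' \<Longrightarrow> PV g' n'"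
      and IHn: "\<And>n'. n' < n \<Longrightarrow> 1 \<le> n' \<Longrightarrow> PV g n'"
      and n: "1 \<le> n"
  shows "PV g n"
  unfolding PV_def
proof (intro allI impI)
  fix j x I
  assume len: "length I = n - 1" and x: "x \<in> Ucut T" and IU: "set I \<subseteq> Ucut T"
     and dist: "distinct (x # I)" and Z: "Zc g j"
  show "W g n j (x # I) = 0"
  proof (cases "(n, g) = (1, 0)")
    case True
    then have "1 \<le> j" using Z by (auto simp: Zc_def Suc_le_eq odd_pos)
    with True show ?thesis using LF_base0[OF LF x] len by auto
  next
    case ng: False
    have U0: "open (Ucut T - set I)" by (rule open_minus_finite[OF open_Ucut]) simp
    have D: "(if 1 \<le> g \<and> 1 \<le> j then deriv (\<lambda>t. W (g - 1) n (j - 1) (t # I)) x else 0) = 0"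
    proof (cases "1 \<le> g \<and> 1 \<le> j")
      case True
      have "Zc (g - 1) (j - 1)" using Z True unfolding Zc_def by presburger
      then have "deriv (\<lambda>t. W (g - 1) n (j - 1) (t # I)) x = 0"
        using IHg[of "g - 1" n] True n len IU dist x
        by (intro deriv_zero_near[OF U0]) (auto simp: PV_def)
      then show ?thesis by simp
    qed auto
    have E: "(if 2 \<le> g then W (g - 2) (n + 1) j (x # x # I) else 0) = 0"
    proof (cases "2 \<le> g")
      case True
      have Z2: "Zc (g - 2) j" using Z True unfolding Zc_def by presburger
      have lim: "((\<lambda>z. W (g - 2) (n + 1) j (x # z # I)) \<longlongrightarrow> W (g - 2) (n + 1) j (x # x # I)) (at x)"
        by (rule LF_lim[OF LF]) (use n len x IU dist in auto)
      have "W (g - 2) (n + 1) j (x # x # I) = 0"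
      proof (rule lim_zero_near[OF lim U0])
        show "x \<in> Ucut T - set I" using x dist by auto
        fix t assume "t \<in> Ucut T - set I" "t \<noteq> x"
        then show "W (g - 2) (n + 1) j (x # t # I) = 0"
          using IHg[of "g - 2" "n + 1"] True Z2 len IU dist x n
          unfolding PV_def by (auto simp: Suc_diff_le)
      qed
      then show ?thesis by simp
    qed auto
    have F: "(\<Sum>S \<in> Pow {..<n-1}. \<Sum>p \<in> {0..g}.
             if (S = {} \<and> p = 0) \<or> (S = {..<n-1} \<and> p = g) then 0
             else (\<Sum>a \<in> {0..j}. W p (card S + 1) a (x # nths I S)
                    * W (g - p) (n - card S) (j - a) (x # nths I ({..<n-1} - S)))) = 0"
    proof (intro sum.neutral ballI)
      fix S p assume S: "S \<in> Pow {..<n-1}" and p: "p \<in> {0..g}"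
      show "(if (S = {} \<and> p = 0) \<or> (S = {..<n-1} \<and> p = g) then 0
             else (\<Sum>a \<in> {0..j}. W p (card S + 1) a (x # nths I S)
                    * W (g - p) (n - card S) (j - a) (x # nths I ({..<n-1} - S)))) = 0"
      proof (cases "(S = {} \<and> p = 0) \<or> (S = {..<n-1} \<and> p = g)")
        case False
        have Ssub: "S \<subseteq> {..<length I}" using S len by auto
        have cS: "card S \<le> n - 1" using card_mono[OF _ S[simplified]] by simp
        have Csub: "{..<n-1} - S \<subseteq> {..<length I}" using len by auto
        have cC: "card ({..<n-1} - S) = n - 1 - card S"
          using S by (subst card_Diff_subset) (auto intro: finite_subset)
        have l1: "length (nths I S) = card S" by (rule length_nths_sub[OF Ssub])
        have l2: "length (nths I ({..<n-1} - S)) = n - card S - 1"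
          using length_nths_sub[OF Csub] cC by simp
        have d1: "distinct (x # nths I S)" using dist set_nths_subset[of I S] by auto
        have d2: "distinct (x # nths I ({..<n-1} - S))" using dist set_nths_subset[of I "{..<n-1} - S"] by auto
        have s1: "set (nths I S) \<subseteq> Ucut T" using IU set_nths_subset[of I S] by auto
        have s2: "set (nths I ({..<n-1} - S)) \<subseteq> Ucut T" using IU set_nths_subset[of I "{..<n-1} - S"] by auto
        have PV1: "PV p (card S + 1)"
        proof (cases "p < g")
          case True then show ?thesis by (intro IHg) auto
        next
          case False
          with p have "p = g" by auto
          with False_def have "S \<noteq> {..<n-1}" using \<open>\<not> ((S = {} \<and> p = 0) \<or> (S = {..<n-1} \<and> p = g))\<close> by auto
          then have "S \<subset> {..<n-1}" using S by auto
          then have "card S < n - 1" by (metis card_lessThan finite_lessThan psubset_card_mono)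
          then show ?thesis using \<open>p = g\<close> IHn[of "card S + 1"] by auto
        qed
        have PV2: "PV (g - p) (n - card S)"
        proof (cases "0 < p")
          case True then show ?thesis using cS n p by (intro IHg) auto
        next
          case False
          then have "p = 0" by simp
          then have "S \<noteq> {}" using \<open>\<not> ((S = {} \<and> p = 0) \<or> (S = {..<n-1} \<and> p = g))\<close> by auto
          then have "card S > 0" using S by (auto simp: card_gt_0_iff intro: finite_subset)
          then show ?thesis using \<open>p = 0\<close> cS IHn[of "n - card S"] by auto
        qed
        have "(\<Sum>a \<in> {0..j}. W p (card S + 1) a (x # nths I S)
                    * W (g - p) (n - card S) (j - a) (x # nths I ({..<n-1} - S))) = 0"
        proof (intro sum.neutral ballI)
          fix a assume a: "a \<in> {0..j}"
          have "Zc p a \<or> Zc (g - p) (j - a)" by (rule Zc_split[OF Z]) (use a p in auto)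
          then show "W p (card S + 1) a (x # nths I S) * W (g - p) (n - card S) (j - a) (x # nths I ({..<n-1} - S)) = 0"
          proof
            assume "Zc p a"
            then have "W p (card S + 1) a (x # nths I S) = 0"
              using PV1 l1 d1 s1 x unfolding PV_def by auto
            then show ?thesis by simp
          next
            assume "Zc (g - p) (j - a)"
            then have "W (g - p) (n - card S) (j - a) (x # nths I ({..<n-1} - S)) = 0"
              using PV2 l2 d2 s2 x unfolding PV_def by auto
            then show ?thesis by simp
          qed
        qed
        then show ?thesis using False by simp
      qed simp
    qed
    have G: "(\<Sum>i < n - 1. deriv (\<lambda>t. (W g (n - 1) j (x # nths I ({..<n-1} - {i}))
                                   - W g (n - 1) j (I[i := t])) / (x - t)) (I ! i)) = 0"
    proof (intro sum.neutral ballI)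
      fix i assume i: "i \<in> {..<n - 1}"
      have n2: "1 \<le> n - 1" and n1: "n - 1 < n" using i by auto
      have PVn: "PV g (n - 1)" by (rule IHn[OF n1 n2])
      define U where "U = Ucut T - (set I - {I ! i})"
      have U: "open U" unfolding U_def by (rule open_minus_finite[OF open_Ucut]) simp
      have iU: "I ! i \<in> U" using i len IU by (auto simp: U_def)
      have Csub: "{..<n-1} - {i} \<subseteq> {..<length I}" using len by auto
      have l1: "length (nths I ({..<n-1} - {i})) = n - 1 - 1"
        using length_nths_sub[OF Csub] i by simp
      have W1: "W g (n - 1) j (x # nths I ({..<n-1} - {i})) = 0"
        using PVn l1 dist set_nths_subset[of I "{..<n-1} - {i}"] IU x Z unfolding PV_def by auto
      have W2: "W g (n - 1) j (I[i := t]) = 0" if t: "t \<in> U" for t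
      proof (rule PV_list[OF PVn n2])
        show "length (I[i := t]) = n - 1" using len by simp
        show "set (I[i := t]) \<subseteq> Ucut T" using IU t set_update_subset_insert[of I i t] by (auto simp: U_def)
        show "distinct (I[i := t])" using dist t by (intro distinct_list_update) (auto simp: U_def)
      qed (rule Z)
      show "deriv (\<lambda>t. (W g (n - 1) j (x # nths I ({..<n-1} - {i})) - W g (n - 1) j (I[i := t])) / (x - t)) (I ! i) = 0"
      proof (rule deriv_zero_near[OF U iU])
        fix t assume "t \<in> U"
        then show "(W g (n - 1) j (x # nths I ({..<n-1} - {i})) - W g (n - 1) j (I[i := t])) / (x - t) = 0"
          using W1 W2[of t] by simp
      qed
    qed
    have "ybr T x * W g n j (x # I) = RHS T W g n j x I"
      by (rule LF_loop[OF LF n ng x len IU dist])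
    also have "\<dots> = 0" unfolding RHS_def using D E F G by simp
    finally show ?thesis using ybr_nz[OF T x] by simp
  qed
qed

lemma vanish_PV: "1 \<le> n \<Longrightarrow> PV g n"
proof (induction g arbitrary: n rule: less_induct)
  case (less g)
  show ?case using less.prems
  proof (induction n rule: less_induct)
    case (less n)
    show ?case by (rule vanish_step) (use less.IH less.prems \<open>\<And>y n. y < g \<Longrightarrow> 1 \<le> n \<Longrightarrow> PV y n\<close> in auto)
  qed
qed

lemma vanish: "1 \<le> n \<Longrightarrow> length xs = n \<Longrightarrow> set xs \<subseteq> Ucut T \<Longrightarrow> distinct xs \<Longrightarrow> Zc g j
   \<Longrightarrow> W g n j xs = 0"
  by (rule PV_list[OF vanish_PV])

lemma vanish_diag: "2 \<le> m \<Longrightarrow> x \<in> Ucut T \<Longrightarrow> length I = m - 2 \<Longrightarrow> set I \<subseteq> Ucut T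
        \<Longrightarrow> distinct (x # I) \<Longrightarrow> Zc g j \<Longrightarrow> W g m j (x # x # I) = 0"
proof -
  assume m: "2 \<le> m" and x: "x \<in> Ucut T" and len: "length I = m - 2" and IU: "set I \<subseteq> Ucut T"
    and dist: "distinct (x # I)" and Z: "Zc g j"
  have U0: "open (Ucut T - set I)" by (rule open_minus_finite[OF open_Ucut]) simp
  show ?thesis
  proof (rule lim_zero_near[OF LF_lim[OF LF m x len IU dist] U0])
    show "x \<in> Ucut T - set I" using x dist by auto
    fix t assume "t \<in> Ucut T - set I" "t \<noteq> x"
    then show "W g m j (x # t # I) = 0"
      using m len IU dist x Z by (intro vanish) auto
  qed
qed

end

fun tD :: "real \<Rightarrow> nat \<Rightarrow> dat" where
  "tD T 0 = ([:0, 1/2:], [:-1/2:], 0)"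
| "tD T (Suc g) = divyD (sumD T (3*g+1) (ddD T (tD T g) # map (\<lambda>p. mulD T (tD T p) (tD T (Suc g - p))) [1..<Suc g]))"

declare tD.simps[simp del]

lemma sum_list_map_zero: "(\<And>X. X \<in> set xs \<Longrightarrow> f X = (0::'a::comm_monoid_add)) \<Longrightarrow> (\<Sum>X\<leftarrow>xs. f X) = 0"
  by (induction xs) auto

lemma tD_props: "Md (tD T g) = (if g = 0 then 0 else 3*g - 1) \<and> good (2 * int g - 1) (tD T g) \<and> lam (2 * int g - 1) (tD T g) = 0"
proof (induction g rule: less_induct)
  case (less g)
  show ?case
  proof (cases g)
    case 0
    have "par [:0, 1/2:] 1" unfolding par_def by (auto simp: coeff_pCons split: nat.splits)
    moreover have "par [:-1/2:] 2" unfolding par_def by (auto simp: coeff_pCons split: nat.splits)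
    moreover have "dle [:0, 1/2:] 1" "dle [:-1/2:] 0" by (auto simp: dle_def)
    ultimately show ?thesis using 0 by (simp add: tD.simps)
  next
    case (Suc h)
    have IH: "\<And>p. p \<le> h \<Longrightarrow> Md (tD T p) = (if p = 0 then 0 else 3*p - 1) \<and> good (2 * int p - 1) (tD T p) \<and> lam (2 * int p - 1) (tD T p) = 0"
      using less.IH Suc by auto
    define xs where "xs = ddD T (tD T h) # map (\<lambda>p. mulD T (tD T p) (tD T (Suc h - p))) [1..<Suc h]"
    have el: "good (2 * int h) X \<and> Md X \<le> 3*h+1 \<and> lam (2 * int h) X = 0" if X: "X \<in> set xs" for X
    proof -
      consider "X = ddD T (tD T h)" | p where "p \<in> {1..<Suc h}" "X = mulD T (tD T p) (tD T (Suc h - p))"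
        using X unfolding xs_def by (auto simp del: upt_Suc)
      then show ?thesis
      proof cases
        case 1
        have i: "Md (tD T h) = (if h = 0 then 0 else 3*h - 1)" "good (2 * int h - 1) (tD T h)" "lam (2 * int h - 1) (tD T h) = 0"
          using IH[of h] by auto
        have "good (2 * int h - 1 + 1) (ddD T (tD T h))" by (rule good_dd[OF i(2)])
        moreover have "lam (2 * int h - 1 + 1) (ddD T (tD T h)) = 0" by (rule lam_dd[OF i(2) i(3)])
        moreover have "Md (ddD T (tD T h)) \<le> 3*h+1" using i(1) by (auto simp: Md_dd)
        ultimately show ?thesis using 1 by simp
      next
        case (2 p)
        have i1: "Md (tD T p) = 3*p - 1" "good (2 * int p - 1) (tD T p)" "lam (2 * int p - 1) (tD T p) = 0"
          using IH[of p] 2 by auto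
        have i2: "Md (tD T (Suc h - p)) = 3*(Suc h - p) - 1" "good (2 * int (Suc h - p) - 1) (tD T (Suc h - p))"
          using IH[of "Suc h - p"] 2 by auto
        have w: "2 * int p - 1 + (2 * int (Suc h - p) - 1) = 2 * int h" using 2 by auto
        have "good (2 * int p - 1 + (2 * int (Suc h - p) - 1)) X" unfolding 2 by (rule good_mul[OF i1(2) i2(2)])
        moreover have "lam (2 * int p - 1 + (2 * int (Suc h - p) - 1)) X = 0"
          unfolding 2 lam_mul[OF i1(2) i2(2)] i1(3) by simp
        moreover have "Md X \<le> 3*h+1" using 2 i1(1) i2(1) by auto
        ultimately show ?thesis using w by simp
      qed
    qed
    have tS: "tD T g = divyD (sumD T (3*h+1) xs)" by (simp add: Suc xs_def tD.simps)
    have M: "Md (sumD T (3*h+1) xs) = 3*h+1" by (rule Md_sumD) (use el in auto)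
    have G: "good (2 * int h) (sumD T (3*h+1) xs)" by (rule good_sumD) (use el in auto)
    have L: "lam (2 * int h) (sumD T (3*h+1) xs) = 0" by (subst lam_sumD) (use el in \<open>auto intro: sum_list_map_zero\<close>)
    have "good (2 * int h + 1) (tD T g)" unfolding tS by (rule good_divy[OF G])
    moreover have "lam (2 * int h + 1) (tD T g) = 0" unfolding tS lam_divy by (rule L)
    ultimately show ?thesis using M Suc tS by (simp add: algebra_simps)
  qed
qed

lemma sum_mid:
  fixes f :: "nat \<Rightarrow> complex"
  shows "(\<Sum>p\<in>{0..N}. if p = 0 \<or> p = N then 0 else f p) = (\<Sum>p\<in>{1..<N}. f p)"
  by (rule sum.mono_neutral_cong_right) auto

context fixes T :: real and W assumes T: "0 < T" and LF: "loop_family T W"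
begin

lemma W1z: "Zc g j \<Longrightarrow> x \<in> Ucut T \<Longrightarrow> W g 1 j [x] = 0"
  by (rule vanish[OF T LF]) auto

lemma RHS1: "x \<in> Ucut T \<Longrightarrow> RHS T W g 1 j x [] =
     (if 1 \<le> g \<and> 1 \<le> j then deriv (\<lambda>t. W (g - 1) 1 (j - 1) [t]) x else 0)
   + (if 2 \<le> g then W (g - 2) 2 j [x, x] else 0)
   + (\<Sum>p\<in>{0..g}. if p = 0 \<or> p = g then 0 else (\<Sum>a\<in>{0..j}. W p 1 a [x] * W (g - p) 1 (j - a) [x]))"
proof -
  have e: "Pow {..<(1::nat) - 1} = {{}}" by simp
  show ?thesis unfolding RHS_def e by (simp add: numeral_2_eq_2 cong: if_cong)
qed

lemma t_eq: "x \<in> Ucut T \<Longrightarrow> W g 1 g [x] = ev T (tD T g) x"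
proof (induction g arbitrary: x rule: less_induct)
  case (less g)
  note x = less.prems
  show ?case
  proof (cases g)
    case 0
    then show ?thesis using LF_base[OF LF x] by (simp add: field_simps tD.simps)
  next
    case (Suc h)
    have IH: "\<And>p t. p \<le> h \<Longrightarrow> t \<in> Ucut T \<Longrightarrow> W p 1 p [t] = ev T (tD T p) t" using less.IH Suc by auto
    have y0: "ybr T x \<noteq> 0" by (rule ybr_nz[OF T x])
    have loop: "ybr T x * W g 1 g [x] = RHS T W g 1 g x []"
      by (rule LF_loop[OF LF]) (use Suc x in auto)
    have d: "deriv (\<lambda>t. W h 1 h [t]) x = ev T (ddD T (tD T h)) x"
      by (rule ev_eq_deriv[OF T x]) (rule IH, auto)
    have diag: "(if 2 \<le> g then W (g - 2) 2 g [x, x] else 0) = 0"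
    proof -
      have "2 \<le> g \<Longrightarrow> W (g - 2) 2 g [x, x] = 0"
        by (rule vanish_diag[OF T LF, of 2 x "[]"]) (use x in \<open>auto simp: Zc_def\<close>)
      then show ?thesis by simp
    qed
    have inner: "(\<Sum>a\<in>{0..g}. W p 1 a [x] * W (g - p) 1 (g - a) [x]) = ev T (tD T p) x * ev T (tD T (g - p)) x"
      if p: "p \<in> {1..<g}" for p
    proof -
      have "(\<Sum>a\<in>{0..g}. W p 1 a [x] * W (g - p) 1 (g - a) [x]) = W p 1 p [x] * W (g - p) 1 (g - p) [x]"
      proof (rule sum_single)
        fix b assume b: "b \<in> {0..g}" "b \<noteq> p"
        show "W p 1 b [x] * W (g - p) 1 (g - b) [x] = 0"
        proof (cases "p < b")
          case True then show ?thesis using W1z[of p b x] x by (simp add: Zc_def)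
        next
          case False
          then have "g - p < g - b" using b p by auto
          then show ?thesis using W1z[of "g - p" "g - b" x] x by (simp add: Zc_def)
        qed
      qed (use p in auto)
      also have "\<dots> = ev T (tD T p) x * ev T (tD T (g - p)) x"
      proof -
        have "g - p \<le> h" "p \<le> h" using p Suc by auto
        then show ?thesis using IH[of p x] IH[of "g - p" x] x by simp
      qed
      finally show ?thesis .
    qed
    have dd: "(if 1 \<le> g \<and> 1 \<le> g then deriv (\<lambda>t. W (g - 1) 1 (g - 1) [t]) x else 0) = ev T (ddD T (tD T h)) x"
      using d Suc by simp
    have pp: "(\<Sum>p\<in>{0..g}. if p = 0 \<or> p = g then 0 else (\<Sum>a\<in>{0..g}. W p 1 a [x] * W (g - p) 1 (g - a) [x]))
        = (\<Sum>p\<in>{1..<g}. ev T (tD T p) x * ev T (tD T (g - p)) x)"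
      unfolding sum_mid by (rule sum.cong[OF refl inner])
    have "RHS T W g 1 g x [] = ev T (ddD T (tD T h)) x + (\<Sum>p\<in>{1..<g}. ev T (tD T p) x * ev T (tD T (g - p)) x)"
      unfolding RHS1[OF x] dd diag pp by simp
    also have "\<dots> = ev T (sumD T (3*h+1) (ddD T (tD T h) # map (\<lambda>p. mulD T (tD T p) (tD T (Suc h - p))) [1..<Suc h])) x"
    proof -
      have Mt: "\<And>p. p \<le> h \<Longrightarrow> Md (tD T p) = (if p = 0 then 0 else 3*p - 1)" using tD_props by blast
      have "ev T (sumD T (3*h+1) (ddD T (tD T h) # map (\<lambda>p. mulD T (tD T p) (tD T (Suc h - p))) [1..<Suc h])) x
         = (\<Sum>X\<leftarrow>ddD T (tD T h) # map (\<lambda>p. mulD T (tD T p) (tD T (Suc h - p))) [1..<Suc h]. ev T X x)"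
      proof (rule ev_sumD[OF T x])
        fix X assume "X \<in> set (ddD T (tD T h) # map (\<lambda>p. mulD T (tD T p) (tD T (Suc h - p))) [1..<Suc h])"
        then consider "X = ddD T (tD T h)" | p where "p \<in> {1..<Suc h}" "X = mulD T (tD T p) (tD T (Suc h - p))"
          by (auto simp del: upt_Suc)
        then show "Md X \<le> 3*h+1"
        proof cases
          case 1 then show ?thesis using Mt[of h] by (auto simp: Md_dd)
        next
          case (2 p) then show ?thesis using Mt[of p] Mt[of "Suc h - p"] by auto
        qed
      qed
      also have "\<dots> = ev T (ddD T (tD T h)) x + (\<Sum>p\<in>{1..<g}. ev T (tD T p) x * ev T (tD T (g - p)) x)"
        by (simp add: Suc ev_mul[OF T x] sum_set_upt_conv_sum_list_nat[symmetric] comp_def)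
      finally show ?thesis by simp
    qed
    finally have "ybr T x * W g 1 g [x] = ev T (sumD T (3*h+1) (ddD T (tD T h) # map (\<lambda>p. mulD T (tD T p) (tD T (Suc h - p))) [1..<Suc h])) x"
      using loop by simp
    then show ?thesis using y0 by (simp add: Suc ev_divy[OF T x] field_simps tD.simps)
  qed
qed

end

declare Tf.simps[simp del] ev.simps[simp del]

type_synonym trm = "dat \<times> dat \<times> nat"

definition evalU :: "real \<Rightarrow> trm list \<Rightarrow> complex \<Rightarrow> complex \<Rightarrow> complex" where
  "evalU T L x z = (\<Sum>(a,F,k)\<leftarrow>L. ev T a x * Tf T F k x z)"

definition diagU :: "real \<Rightarrow> trm list \<Rightarrow> complex \<Rightarrow> complex" where
  "diagU T L x = (\<Sum>(a,F,k)\<leftarrow>L. ev T a x * (ev T (ddn T k F) x / fact k))"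

definition dU :: "real \<Rightarrow> trm list \<Rightarrow> trm list" where
  "dU T L = concat (map (\<lambda>(a,F,k). [(ddD T a, F, k), (a, ddD T F, k), (smD (- of_nat k) a, F, Suc k)]) L)"

definition mulU :: "real \<Rightarrow> dat \<Rightarrow> trm list \<Rightarrow> trm list" where
  "mulU T b L = map (\<lambda>(a,F,k). (mulD T b a, F, k)) L"

definition divyU :: "trm list \<Rightarrow> trm list" where
  "divyU L = map (\<lambda>(a,F,k). (divyD a, F, k)) L"

definition one0 :: dat where "one0 = ([:1:], 0, 0)"
definition invy :: dat where "invy = ([:1:], 0, 1)"

fun uL :: "real \<Rightarrow> nat \<Rightarrow> trm list" where
  "uL T 0 = [(invy, tD T 0, 2)]"
| "uL T (Suc h) = divyU (dU T (uL T h)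
      @ concat (map (\<lambda>p. mulU T (tD T p) (uL T (Suc h - p))) [1..<Suc (Suc h)])
      @ concat (map (\<lambda>p. mulU T (tD T (Suc h - p)) (uL T p)) [0..<Suc h])
      @ [(one0, tD T (Suc h), 2)])"

declare uL.simps[simp del]

definition Dd :: "real \<Rightarrow> nat \<Rightarrow> dat" where
  "Dd T h = sumD T (3*h+4) (map (\<lambda>(a,F,k). smD (1 / fact k) (mulD T a (ddn T k F))) (uL T h))"

lemma evalU_nil[simp]: "evalU T [] x z = 0" by (simp add: evalU_def)
lemma evalU_cons[simp]: "evalU T ((a,F,k) # L) x z = ev T a x * Tf T F k x z + evalU T L x z"
  by (simp add: evalU_def)
lemma evalU_append[simp]: "evalU T (L1 @ L2) x z = evalU T L1 x z + evalU T L2 x z"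
  by (simp add: evalU_def)
lemma evalU_concat: "evalU T (concat (map f xs)) x z = (\<Sum>p\<leftarrow>xs. evalU T (f p) x z)"
  by (induction xs) auto

lemma diagU_nil[simp]: "diagU T [] x = 0" by (simp add: diagU_def)
lemma diagU_cons[simp]: "diagU T ((a,F,k) # L) x = ev T a x * (ev T (ddn T k F) x / fact k) + diagU T L x"
  by (simp add: diagU_def)

context fixes T :: real and x :: complex assumes T: "0 < T" and x: "x \<in> Ucut T"
begin

lemma evalU_mul: "evalU T (mulU T b L) x z = ev T b x * evalU T L x z"
proof (induction L)
  case Nil then show ?case by (simp add: mulU_def)
next
  case (Cons trm L)
  obtain a F k where trm: "trm = (a,F,k)" by (cases trm) auto
  have "mulU T b (trm # L) = (mulD T b a, F, k) # mulU T b L" by (simp add: mulU_def trm)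
  then show ?case using Cons.IH by (simp add: trm ev_mul[OF T x] algebra_simps)
qed

lemma evalU_divy: "evalU T (divyU L) x z = evalU T L x z / ybr T x"
proof (induction L)
  case Nil then show ?case by (simp add: divyU_def)
next
  case (Cons trm L)
  obtain a F k where trm: "trm = (a,F,k)" by (cases trm) auto
  have "divyU (trm # L) = (divyD a, F, k) # divyU L" by (simp add: divyU_def trm)
  then show ?case using Cons.IH by (simp add: trm ev_divy[OF T x] add_divide_distrib)
qed

lemma evalU_deriv: "x \<noteq> z \<Longrightarrow> ((\<lambda>t. evalU T L t z) has_field_derivative evalU T (dU T L) x z) (at x)"
proof (induction L)
  case Nil then show ?case by (simp add: dU_def)
next
  case (Cons trm L)
  obtain a F k where trm: "trm = (a,F,k)" by (cases trm) auto
  have d1: "((\<lambda>t. ev T a t * Tf T F k t z) has_field_derivative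
      ev T (ddD T a) x * Tf T F k x z + ev T a x * (Tf T (ddD T F) k x z - of_nat k * Tf T F (Suc k) x z)) (at x)"
    using DERIV_mult[OF ev_deriv[OF T x] Tf_deriv[OF T x Cons.prems]] by (simp add: algebra_simps)
  have "((\<lambda>t. ev T a t * Tf T F k t z + evalU T L t z) has_field_derivative
      (ev T (ddD T a) x * Tf T F k x z + ev T a x * (Tf T (ddD T F) k x z - of_nat k * Tf T F (Suc k) x z))
       + evalU T (dU T L) x z) (at x)"
    by (rule DERIV_add[OF d1 Cons.IH[OF Cons.prems]])
  moreover have "dU T (trm # L) = [(ddD T a, F, k), (a, ddD T F, k), (smD (- of_nat k) a, F, Suc k)] @ dU T L"
    by (simp add: dU_def trm)
  ultimately show ?case by (simp add: trm ev_sm[OF T x] algebra_simps)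
qed

end

lemma good_ddn: "good w F \<Longrightarrow> good (w + int k) (ddn T k F)"
proof (induction k)
  case 0 then show ?case by simp
next
  case (Suc k)
  have "good (w + int k + 1) (ddD T (ddn T k F))" by (rule good_dd[OF Suc.IH[OF Suc.prems]])
  then show ?case by (simp add: algebra_simps)
qed
lemma lam_ddn: "good w F \<Longrightarrow> lam w F = 0 \<Longrightarrow> lam (w + int k) (ddn T k F) = 0"
proof (induction k)
  case 0 then show ?case by simp
next
  case (Suc k)
  have "lam (w + int k + 1) (ddD T (ddn T k F)) = 0"
    by (rule lam_dd[OF good_ddn[OF Suc.prems(1)] Suc.IH[OF Suc.prems]])
  then show ?case by (simp add: algebra_simps)
qed
lemma Md_ddn: "Md (ddn T k F) \<le> Md F + 2 * k"
proof (induction k)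
  case (Suc k) then show ?case using Md_dd_le[of T "ddn T k F"] by simp
qed simp

fun invT :: "real \<Rightarrow> int \<Rightarrow> nat \<Rightarrow> trm \<Rightarrow> bool" where
  "invT T Wt Mb (a,F,k) \<longleftrightarrow> (\<exists>wa wf. good wa a \<and> good wf F \<and> lam wf F = 0
       \<and> wa + wf + int k = Wt \<and> Md a + Md (ddn T k F) \<le> Mb)"

definition invU :: "real \<Rightarrow> int \<Rightarrow> nat \<Rightarrow> trm list \<Rightarrow> bool" where
  "invU T Wt Mb L \<longleftrightarrow> (\<forall>t\<in>set L. invT T Wt Mb t)"

lemma invU_append: "invU T W M L1 \<Longrightarrow> invU T W M L2 \<Longrightarrow> invU T W M (L1 @ L2)"
  unfolding invU_def by auto
lemma invU_concat: "(\<And>p. p \<in> set xs \<Longrightarrow> invU T W M (f p)) \<Longrightarrow> invU T W M (concat (map f xs))"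
  unfolding invU_def by auto

lemma invU_divy: assumes "invU T W M L" shows "invU T (W + 1) (M + 1) (divyU L)"
  unfolding invU_def divyU_def
proof
  fix t assume "t \<in> set (map (\<lambda>(a,F,k). (divyD a, F, k)) L)"
  then obtain a F k where m: "(a,F,k) \<in> set L" and t: "t = (divyD a, F, k)" by auto
  then obtain wa wf where h: "good wa a" "good wf F" "lam wf F = 0" "wa + wf + int k = W" "Md a + Md (ddn T k F) \<le> M"
    using assms unfolding invU_def by fastforce
  show "invT T (W + 1) (M + 1) t" unfolding t invT.simps
    using good_divy[OF h(1)] h by (intro exI[of _ "wa + 1"] exI[of _ wf]) auto
qed

lemma invU_mul: assumes "good wb b" "invU T W M L" shows "invU T (W + wb) (M + Md b) (mulU T b L)"
  unfolding invU_def mulU_def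
proof
  fix t assume "t \<in> set (map (\<lambda>(a,F,k). (mulD T b a, F, k)) L)"
  then obtain a F k where m: "(a,F,k) \<in> set L" and t: "t = (mulD T b a, F, k)" by auto
  then obtain wa wf where h: "good wa a" "good wf F" "lam wf F = 0" "wa + wf + int k = W" "Md a + Md (ddn T k F) \<le> M"
    using assms(2) unfolding invU_def by fastforce
  show "invT T (W + wb) (M + Md b) t" unfolding t invT.simps
    using good_mul[OF assms(1) h(1), of T] h by (intro exI[of _ "wb + wa"] exI[of _ wf]) auto
qed

lemma invU_dU: assumes "invU T W M L" shows "invU T (W + 1) (M + 2) (dU T L)"
  unfolding invU_def dU_def
proof
  fix t assume "t \<in> set (concat (map (\<lambda>(a,F,k). [(ddD T a, F, k), (a, ddD T F, k), (smD (- of_nat k) a, F, Suc k)]) L))"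
  then obtain a F k where m: "(a,F,k) \<in> set L" and
    t: "t = (ddD T a, F, k) \<or> t = (a, ddD T F, k) \<or> t = (smD (- of_nat k) a, F, Suc k)" by auto
  then obtain wa wf where h: "good wa a" "good wf F" "lam wf F = 0" "wa + wf + int k = W" "Md a + Md (ddn T k F) \<le> M"
    using assms unfolding invU_def by fastforce
  have k1: "Md (ddn T (Suc k) F) \<le> Md (ddn T k F) + 2" using Md_dd_le[of T "ddn T k F"] by simp
  have t1: "invT T (W + 1) (M + 2) (ddD T a, F, k)" unfolding invT.simps
    using good_dd[OF h(1), of T] h Md_dd_le[of T a] by (intro exI[of _ "wa + 1"] exI[of _ wf]) auto
  have t2: "invT T (W + 1) (M + 2) (a, ddD T F, k)" unfolding invT.simps ddn_dd
    using good_dd[OF h(2), of T] lam_dd[OF h(2) h(3), of T] h k1 by (intro exI[of _ wa] exI[of _ "wf + 1"]) auto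
  have t3: "invT T (W + 1) (M + 2) (smD (- of_nat k) a, F, Suc k)" unfolding invT.simps
    using good_sm[OF h(1)] h k1 by (intro exI[of _ wa] exI[of _ wf]) auto
  show "invT T (W + 1) (M + 2) t" using t t1 t2 t3 by (auto simp del: invT.simps)
qed

lemma invT_mono: assumes "invT T W M t" "M \<le> M'" shows "invT T W M' t"
proof -
  obtain a F k where t: "t = (a,F,k)" by (cases t) auto
  from assms(1) obtain wa wf where h: "good wa a" "good wf F" "lam wf F = 0" "wa + wf + int k = W" "Md a + Md (ddn T k F) \<le> M"
    unfolding t by auto
  show ?thesis unfolding t invT.simps using h assms(2) by (intro exI[of _ wa] exI[of _ wf]) auto
qed
lemma invU_mono: "invU T W M L \<Longrightarrow> M \<le> M' \<Longrightarrow> invU T W M' L"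
  unfolding invU_def using invT_mono by blast

lemma Md_tD: "Md (tD T p) = (if p = 0 then 0 else 3*p - 1)" using tD_props by blast
lemma good_tD: "good (2 * int p - 1) (tD T p)" using tD_props by blast
lemma lam_tD: "lam (2 * int p - 1) (tD T p) = 0" using tD_props by blast

lemma uL_inv: "invU T (2 * int h + 2) (3*h+4) (uL T h)"
proof (induction h rule: less_induct)
  case (less h)
  show ?case
  proof (cases h)
    case 0
    have g1: "good 1 invy" by (simp add: invy_def dle_def par_one)
    have M: "Md (ddn T 2 (tD T 0)) = 3" by (simp add: numeral_2_eq_2 tD.simps)
    have "invT T 2 4 (invy, tD T 0, 2)" unfolding invT.simps
      using g1 good_tD[of 0 T] lam_tD[of 0 T] M by (intro exI[of _ 1] exI[of _ "-1"]) (simp add: invy_def)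
    then show ?thesis using 0 by (simp add: invU_def uL.simps)
  next
    case (Suc g)
    have IH: "\<And>p. p \<le> g \<Longrightarrow> invU T (2 * int p + 2) (3*p+4) (uL T p)" using less.IH Suc by auto
    have A: "invU T (2 * int g + 3) (3*g+6) (dU T (uL T g))"
      using invU_dU[OF IH[of g]] by (simp add: algebra_simps)
    have B: "invU T (2 * int g + 3) (3*g+6) (concat (map (\<lambda>p. mulU T (tD T p) (uL T (Suc g - p))) [1..<Suc (Suc g)]))"
    proof (rule invU_concat)
      fix p assume p: "p \<in> set [1..<Suc (Suc g)]"
      then have pp: "1 \<le> p" "p \<le> Suc g" by auto
      have i: "invU T (2 * int (Suc g - p) + 2) (3*(Suc g - p)+4) (uL T (Suc g - p))" by (rule IH) (use pp in auto)
      have "invU T (2 * int (Suc g - p) + 2 + (2 * int p - 1)) (3*(Suc g - p)+4 + Md (tD T p)) (mulU T (tD T p) (uL T (Suc g - p)))"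
        by (rule invU_mul[OF good_tD i])
      moreover have "2 * int (Suc g - p) + 2 + (2 * int p - 1) = 2 * int g + 3" using pp by auto
      moreover have "3*(Suc g - p)+4 + Md (tD T p) = 3*g+6" using pp by (auto simp: Md_tD)
      ultimately show "invU T (2 * int g + 3) (3*g+6) (mulU T (tD T p) (uL T (Suc g - p)))" by (simp add: ac_simps)
    qed
    have C: "invU T (2 * int g + 3) (3*g+6) (concat (map (\<lambda>p. mulU T (tD T (Suc g - p)) (uL T p)) [0..<Suc g]))"
    proof (rule invU_concat)
      fix p assume p: "p \<in> set [0..<Suc g]"
      then have pp: "p \<le> g" by auto
      have i: "invU T (2 * int p + 2) (3*p+4) (uL T p)" using IH pp by auto
      have "invU T (2 * int p + 2 + (2 * int (Suc g - p) - 1)) (3*p+4 + Md (tD T (Suc g - p))) (mulU T (tD T (Suc g - p)) (uL T p))"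
        by (rule invU_mul[OF good_tD i])
      moreover have "2 * int p + 2 + (2 * int (Suc g - p) - 1) = 2 * int g + 3" using pp by auto
      moreover have "3*p+4 + Md (tD T (Suc g - p)) = 3*g+6" using pp by (auto simp: Md_tD)
      ultimately show "invU T (2 * int g + 3) (3*g+6) (mulU T (tD T (Suc g - p)) (uL T p))" by (simp add: ac_simps)
    qed
    have D: "invU T (2 * int g + 3) (3*g+6) [(one0, tD T (Suc g), 2)]"
    proof -
      have g0: "good 0 one0" by (simp add: one0_def dle_def par_one)
      have "Md (ddn T 2 (tD T (Suc g))) \<le> Md (tD T (Suc g)) + 2 * 2" by (rule Md_ddn)
      then have M: "Md (ddn T 2 (tD T (Suc g))) \<le> 3*g+6" by (simp add: Md_tD)
      have "invT T (2 * int g + 3) (3*g+6) (one0, tD T (Suc g), 2)" unfolding invT.simps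
        using g0 good_tD[of "Suc g" T] lam_tD[of "Suc g" T] M
        by (intro exI[of _ 0] exI[of _ "2 * int (Suc g) - 1"]) (simp add: one0_def)
      then show ?thesis by (simp add: invU_def)
    qed
    have "invU T (2 * int g + 3 + 1) (3*g+6+1) (uL T (Suc g))"
      unfolding uL.simps by (intro invU_divy invU_append A B C D)
    then show ?thesis using Suc by (simp add: algebra_simps)
  qed
qed

lemma sum_mid0:
  fixes f :: "nat \<Rightarrow> complex"
  shows "(\<Sum>p\<in>{0..N}. if p = 0 then 0 else f p) = (\<Sum>p\<in>{1..<Suc N}. f p)"
  by (rule sum.mono_neutral_cong_right) auto
lemma sum_midN:
  fixes f :: "nat \<Rightarrow> complex"
  shows "(\<Sum>p\<in>{0..N}. if p = N then 0 else f p) = (\<Sum>p\<in>{0..<N}. f p)"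
  by (rule sum.mono_neutral_cong_right) auto

lemma RHS2: "RHS T W g 2 j x [z] =
     (if 1 \<le> g \<and> 1 \<le> j then deriv (\<lambda>t. W (g - 1) 2 (j - 1) [t, z]) x else 0)
   + (if 2 \<le> g then W (g - 2) 3 j [x, x, z] else 0)
   + (\<Sum>p\<in>{0..g}. if p = 0 then 0 else (\<Sum>a\<in>{0..j}. W p 1 a [x] * W (g - p) 2 (j - a) [x, z]))
   + (\<Sum>p\<in>{0..g}. if p = g then 0 else (\<Sum>a\<in>{0..j}. W p 2 a [x, z] * W (g - p) 1 (j - a) [x]))
   + deriv (\<lambda>t. (W g 1 j [x] - W g 1 j [t]) / (x - t)) z"
proof -
  have e1: "{..<(2::nat) - 1} = {0}" by auto
  have e2: "Pow {0::nat} = {{}, {0}}" by auto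
  have e3: "(2::nat) + 1 = 3" by simp
  show ?thesis unfolding RHS_def e1 e2 e3
    by (simp add: numeral_2_eq_2 sum.insert cong: if_cong)
qed

context fixes T :: real and W assumes T: "0 < T" and LF: "loop_family T W"
begin

lemma W2z: "Zc g j \<Longrightarrow> x \<in> Ucut T \<Longrightarrow> z \<in> Ucut T \<Longrightarrow> x \<noteq> z \<Longrightarrow> W g 2 j [x, z] = 0"
  by (rule vanish[OF T LF]) auto

lemma u_eq: "x \<in> Ucut T \<Longrightarrow> z \<in> Ucut T \<Longrightarrow> x \<noteq> z \<Longrightarrow> W h 2 h [x, z] = evalU T (uL T h) x z"
proof (induction h arbitrary: x z rule: less_induct)
  case (less h)
  note x = less.prems(1) and z = less.prems(2) and xz = less.prems(3)
  have IH: "\<And>p x z. p < h \<Longrightarrow> x \<in> Ucut T \<Longrightarrow> z \<in> Ucut T \<Longrightarrow> x \<noteq> z \<Longrightarrow> W p 2 p [x, z] = evalU T (uL T p) x z"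
    using less.IH by blast
  have y0: "ybr T x \<noteq> 0" by (rule ybr_nz[OF T x])
  have loop: "ybr T x * W h 2 h [x, z] = RHS T W h 2 h x [z]"
    by (rule LF_loop[OF LF]) (use x z xz in auto)
  have B: "(if 2 \<le> h then W (h - 2) 3 h [x, x, z] else 0) = 0"
  proof -
    have "2 \<le> h \<Longrightarrow> W (h - 2) 3 h [x, x, z] = 0"
      by (rule vanish_diag[OF T LF, of 3 x "[z]"]) (use x z xz in \<open>auto simp: Zc_def\<close>)
    then show ?thesis by simp
  qed
  have C1: "(\<Sum>p\<in>{0..h}. if p = 0 then 0 else (\<Sum>a\<in>{0..h}. W p 1 a [x] * W (h - p) 2 (h - a) [x, z]))
      = (\<Sum>p\<in>{1..<Suc h}. ev T (tD T p) x * evalU T (uL T (h - p)) x z)"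
    unfolding sum_mid0
  proof (rule sum.cong[OF refl])
    fix p assume p: "p \<in> {1..<Suc h}"
    have "(\<Sum>a\<in>{0..h}. W p 1 a [x] * W (h - p) 2 (h - a) [x, z]) = W p 1 p [x] * W (h - p) 2 (h - p) [x, z]"
    proof (rule sum_single)
      fix b assume b: "b \<in> {0..h}" "b \<noteq> p"
      show "W p 1 b [x] * W (h - p) 2 (h - b) [x, z] = 0"
      proof (cases "p < b")
        case True then show ?thesis using W1z[OF T LF, of p b x] x by (simp add: Zc_def)
      next
        case False
        then have "h - p < h - b" using b p by auto
        then show ?thesis using W2z[of "h - p" "h - b" x z] x z xz by (simp add: Zc_def)
      qed
    qed (use p in auto)
    also have "\<dots> = ev T (tD T p) x * evalU T (uL T (h - p)) x z"
      using t_eq[OF T LF x, of p] IH[of "h - p" x z] p x z xz by auto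
    finally show "(\<Sum>a\<in>{0..h}. W p 1 a [x] * W (h - p) 2 (h - a) [x, z]) = ev T (tD T p) x * evalU T (uL T (h - p)) x z" .
  qed
  have C2: "(\<Sum>p\<in>{0..h}. if p = h then 0 else (\<Sum>a\<in>{0..h}. W p 2 a [x, z] * W (h - p) 1 (h - a) [x]))
      = (\<Sum>p\<in>{0..<h}. ev T (tD T (h - p)) x * evalU T (uL T p) x z)"
    unfolding sum_midN
  proof (rule sum.cong[OF refl])
    fix p assume p: "p \<in> {0..<h}"
    have "(\<Sum>a\<in>{0..h}. W p 2 a [x, z] * W (h - p) 1 (h - a) [x]) = W p 2 p [x, z] * W (h - p) 1 (h - p) [x]"
    proof (rule sum_single)
      fix b assume b: "b \<in> {0..h}" "b \<noteq> p"
      show "W p 2 b [x, z] * W (h - p) 1 (h - b) [x] = 0"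
      proof (cases "p < b")
        case True then show ?thesis using W2z[of p b x z] x z xz by (simp add: Zc_def)
      next
        case False
        then have "h - p < h - b" using b p by auto
        then show ?thesis using W1z[OF T LF, of "h - p" "h - b" x] x by (simp add: Zc_def)
      qed
    qed (use p in auto)
    also have "\<dots> = ev T (tD T (h - p)) x * evalU T (uL T p) x z"
      using t_eq[OF T LF x, of "h - p"] IH[of p x z] p x z xz by auto
    finally show "(\<Sum>a\<in>{0..h}. W p 2 a [x, z] * W (h - p) 1 (h - a) [x]) = ev T (tD T (h - p)) x * evalU T (uL T p) x z" .
  qed
  have E: "deriv (\<lambda>t. (W h 1 h [x] - W h 1 h [t]) / (x - t)) z = Tf T (tD T h) 2 x z"
    by (rule src_deriv[OF T x z xz]) (rule t_eq[OF T LF])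
  show ?case
  proof (cases h)
    case 0
    have "ybr T x * W h 2 h [x, z] = Tf T (tD T h) 2 x z"
      using loop unfolding RHS2 B C1 C2 E using 0 by simp
    then show ?thesis using y0 0 by (simp add: uL.simps invy_def ev.simps field_simps)
  next
    case (Suc g)
    have A: "(if 1 \<le> h \<and> 1 \<le> h then deriv (\<lambda>t. W (h - 1) 2 (h - 1) [t, z]) x else 0) = evalU T (dU T (uL T g)) x z"
    proof -
      have ev: "eventually (\<lambda>t. W g 2 g [t, z] = evalU T (uL T g) t z) (nhds x)"
      proof -
        have "open (Ucut T - {z})" using open_Ucut by (simp add: open_Diff)
        moreover have "x \<in> Ucut T - {z}" using x xz by auto
        ultimately show ?thesis unfolding eventually_nhds using IH[of g] Suc z by (intro exI[of _ "Ucut T - {z}"]) auto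
      qed
      have "deriv (\<lambda>t. W g 2 g [t, z]) x = deriv (\<lambda>t. evalU T (uL T g) t z) x"
        by (rule deriv_cong_ev[OF ev]) simp
      also have "\<dots> = evalU T (dU T (uL T g)) x z" by (rule DERIV_imp_deriv[OF evalU_deriv[OF T x xz]])
      finally show ?thesis using Suc by simp
    qed
    have "ybr T x * W h 2 h [x, z] = evalU T (dU T (uL T g)) x z
        + (\<Sum>p\<in>{1..<Suc h}. ev T (tD T p) x * evalU T (uL T (h - p)) x z)
        + (\<Sum>p\<in>{0..<h}. ev T (tD T (h - p)) x * evalU T (uL T p) x z) + Tf T (tD T h) 2 x z"
      using loop unfolding RHS2 A B C1 C2 E by simp
    also have "\<dots> = ybr T x * evalU T (uL T h) x z"
      using y0 unfolding Suc uL.simps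
      by (simp add: evalU_divy[OF T x] evalU_concat evalU_mul[OF T x] sum_set_upt_conv_sum_list_nat[symmetric]
          one0_def ev.simps comp_def del: upt_Suc)
    finally show ?thesis using y0 by simp
  qed
qed

lemma evalU_lim: "x \<in> Ucut T \<Longrightarrow> ((\<lambda>z. evalU T L x z) \<longlongrightarrow> diagU T L x) (at x)"
proof (induction L)
  case Nil then show ?case by simp
next
  case (Cons trm L)
  obtain a F k where trm: "trm = (a,F,k)" by (cases trm) auto
  have "((\<lambda>z. ev T a x * Tf T F k x z + evalU T L x z) \<longlongrightarrow> ev T a x * (ev T (ddn T k F) x / fact k) + diagU T L x) (at x)"
    by (intro tendsto_add tendsto_mult tendsto_const Tf_lim[OF T Cons.prems] Cons.IH[OF Cons.prems])
  then show ?case by (simp add: trm)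
qed

lemma D_eq: "x \<in> Ucut T \<Longrightarrow> W h 2 h [x, x] = diagU T (uL T h) x"
proof -
  assume x: "x \<in> Ucut T"
  have l1: "((\<lambda>z. W h 2 h [x, z]) \<longlongrightarrow> W h 2 h [x, x]) (at x)"
    by (rule LF_lim[OF LF, of 2 x "[]"]) (use x in auto)
  have ev: "eventually (\<lambda>z. evalU T (uL T h) x z = W h 2 h [x, z]) (at x)"
    unfolding eventually_at_topological using open_Ucut x u_eq[OF x] by (intro exI[of _ "Ucut T"]) auto
  have l2: "((\<lambda>z. W h 2 h [x, z]) \<longlongrightarrow> diagU T (uL T h) x) (at x)"
    by (rule tendsto_cong[THEN iffD1, OF ev evalU_lim[OF x]])
  show ?thesis by (rule tendsto_unique[OF _ l1 l2]) simp
qed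

end

lemma Dd_props: "good (2 * int h + 2) (Dd T h) \<and> lam (2 * int h + 2) (Dd T h) = 0 \<and> Md (Dd T h) = 3*h+4"
proof -
  define xs where "xs = map (\<lambda>(a,F,k). smD (1 / fact k) (mulD T a (ddn T k F))) (uL T h)"
  have el: "good (2 * int h + 2) X \<and> Md X \<le> 3*h+4 \<and> lam (2 * int h + 2) X = 0" if X: "X \<in> set xs" for X
  proof -
    obtain a F k where m: "(a,F,k) \<in> set (uL T h)" and Xe: "X = smD (1 / fact k) (mulD T a (ddn T k F))"
      using X unfolding xs_def by auto
    have "invT T (2 * int h + 2) (3*h+4) (a,F,k)" using uL_inv[of T h] m unfolding invU_def by blast
    then obtain wa wf where h: "good wa a" "good wf F" "lam wf F = 0" "wa + wf + int k = 2 * int h + 2" "Md a + Md (ddn T k F) \<le> 3*h+4"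
      by auto
    have g1: "good (wf + int k) (ddn T k F)" by (rule good_ddn[OF h(2)])
    have l1: "lam (wf + int k) (ddn T k F) = 0" by (rule lam_ddn[OF h(2) h(3)])
    have "good (wa + (wf + int k)) (mulD T a (ddn T k F))" by (rule good_mul[OF h(1) g1])
    moreover have "lam (wa + (wf + int k)) (mulD T a (ddn T k F)) = 0" by (simp add: lam_mul[OF h(1) g1] l1)
    ultimately show ?thesis using h(4,5) unfolding Xe by (simp add: good_sm lam_sm algebra_simps)
  qed
  have "Dd T h = sumD T (3*h+4) xs" by (simp add: Dd_def xs_def)
  then show ?thesis
    using good_sumD[of xs "2 * int h + 2" "3*h+4" T] lam_sumD[of xs "2 * int h + 2" "3*h+4" T] Md_sumD[of xs "3*h+4" T] el
    by (auto intro: sum_list_map_zero)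
qed

lemma ev_Dd: "0 < T \<Longrightarrow> x \<in> Ucut T \<Longrightarrow> ev T (Dd T h) x = diagU T (uL T h) x"
proof -
  assume T: "0 < T" and x: "x \<in> Ucut T"
  have Mb: "Md X \<le> 3*h+4" if "X \<in> set (map (\<lambda>(a,F,k). smD (1 / fact k) (mulD T a (ddn T k F))) (uL T h))" for X
  proof -
    from that obtain t where t: "t \<in> set (uL T h)" "X = (\<lambda>(a,F,k). smD (1 / fact k) (mulD T a (ddn T k F))) t"
      by auto
    obtain a F k where te: "t = (a,F,k)" by (cases t) auto
    have "invT T (2 * int h + 2) (3*h+4) (a,F,k)" using uL_inv[of T h] t te unfolding invU_def by blast
    then show ?thesis using t te by auto
  qed
  have "ev T (Dd T h) x = (\<Sum>X\<leftarrow>map (\<lambda>(a,F,k). smD (1 / fact k) (mulD T a (ddn T k F))) (uL T h). ev T X x)"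
    unfolding Dd_def by (rule ev_sumD[OF T x Mb])
  also have "\<dots> = diagU T (uL T h) x"
    unfolding diagU_def map_map
  proof (rule arg_cong[where f=sum_list], rule map_cong[OF refl])
    fix t assume "t \<in> set (uL T h)"
    obtain a F k where te: "t = (a,F,k)" by (cases t) auto
    show "((\<lambda>X. ev T X x) \<circ> (\<lambda>(a,F,k). smD (1 / fact k) (mulD T a (ddn T k F)))) t
        = (\<lambda>(a,F,k). ev T a x * (ev T (ddn T k F) x / fact k)) t"
      by (simp add: te ev_sm[OF T x] ev_mul[OF T x])
  qed
  finally show ?thesis .
qed

fun sD :: "real \<Rightarrow> nat \<Rightarrow> dat" where
  "sD T 0 = (0,0,0)"
| "sD T (Suc 0) = (0,0,0)"
| "sD T (Suc (Suc g)) = divyD (sumD T (3*g+4)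
      ((if g = 0 then [] else [ddD T (sD T (Suc g))]) @ Dd T g
        # map (\<lambda>p. mulD T (tD T p) (sD T (Suc (Suc g) - p))) [1..<Suc g]
        @ map (\<lambda>p. mulD T (sD T p) (tD T (Suc (Suc g) - p))) [2..<Suc (Suc g)]))"

declare sD.simps[simp del]

abbreviation sL :: "real \<Rightarrow> nat \<Rightarrow> dat list" where
  "sL T g \<equiv> (if g = 0 then [] else [ddD T (sD T (Suc g))]) @ Dd T g
        # map (\<lambda>p. mulD T (tD T p) (sD T (Suc (Suc g) - p))) [1..<Suc g]
        @ map (\<lambda>p. mulD T (sD T p) (tD T (Suc (Suc g) - p))) [2..<Suc (Suc g)]"

lemma sD_SS: "sD T (Suc (Suc g)) = divyD (sumD T (3*g+4) (sL T g))"
  by (simp add: sD.simps)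

lemma sD_props: "2 \<le> G \<Longrightarrow> Md (sD T G) = 3*G - 1 \<and> good (2 * int G - 1) (sD T G) \<and> lam (2 * int G - 1) (sD T G) = 0"
proof (induction G rule: less_induct)
  case (less G)
  obtain g where G: "G = Suc (Suc g)" using less.prems by (metis add_2_eq_Suc le_Suc_ex)
  have IH: "\<And>p. 2 \<le> p \<Longrightarrow> p < G \<Longrightarrow> Md (sD T p) = 3*p - 1 \<and> good (2 * int p - 1) (sD T p) \<and> lam (2 * int p - 1) (sD T p) = 0"
    using less.IH by blast
  have el: "good (2 * int g + 2) X \<and> Md X \<le> 3*g+4 \<and> lam (2 * int g + 2) X = 0" if X: "X \<in> set (sL T g)" for X
  proof -
    consider "g \<noteq> 0" "X = ddD T (sD T (Suc g))" | "X = Dd T g"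
      | p where "p \<in> {1..<Suc g}" "X = mulD T (tD T p) (sD T (Suc (Suc g) - p))"
      | p where "p \<in> {2..<Suc (Suc g)}" "X = mulD T (sD T p) (tD T (Suc (Suc g) - p))"
      using X by (auto split: if_splits simp del: upt_Suc)
    then show ?thesis
    proof cases
      case 1
      have i: "Md (sD T (Suc g)) = 3 * Suc g - 1" "good (2 * int (Suc g) - 1) (sD T (Suc g))" "lam (2 * int (Suc g) - 1) (sD T (Suc g)) = 0"
        using IH[of "Suc g"] 1 G by auto
      have "good (2 * int (Suc g) - 1 + 1) X" unfolding 1 by (rule good_dd[OF i(2)])
      moreover have "lam (2 * int (Suc g) - 1 + 1) X = 0" unfolding 1 by (rule lam_dd[OF i(2) i(3)])
      moreover have "Md X \<le> 3*g+4" unfolding 1 using Md_dd_le[of T "sD T (Suc g)"] i(1) by simp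
      ultimately show ?thesis by (simp add: algebra_simps)
    next
      case 2 then show ?thesis using Dd_props[of g T] by simp
    next
      case (3 p)
      have i1: "Md (tD T p) = 3*p - 1" "good (2 * int p - 1) (tD T p)" "lam (2 * int p - 1) (tD T p) = 0"
        using 3 by (auto simp: Md_tD good_tD lam_tD)
      have i2: "Md (sD T (G - p)) = 3*(G - p) - 1" "good (2 * int (G - p) - 1) (sD T (G - p))"
        using IH[of "G - p"] 3 G by auto
      have "good (2 * int p - 1 + (2 * int (G - p) - 1)) (mulD T (tD T p) (sD T (G - p)))" by (rule good_mul[OF i1(2) i2(2)])
      moreover have "lam (2 * int p - 1 + (2 * int (G - p) - 1)) (mulD T (tD T p) (sD T (G - p))) = 0"
        unfolding lam_mul[OF i1(2) i2(2)] i1(3) by simp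
      moreover have "2 * int p - 1 + (2 * int (G - p) - 1) = 2 * int g + 2" using 3 G by auto
      moreover have "Md (mulD T (tD T p) (sD T (G - p))) \<le> 3*g+4" using i1(1) i2(1) 3 G by auto
      ultimately show ?thesis using 3 G by (simp add: ac_simps)
    next
      case (4 p)
      have i1: "Md (tD T (G - p)) = 3*(G - p) - 1" "good (2 * int (G - p) - 1) (tD T (G - p))" "lam (2 * int (G - p) - 1) (tD T (G - p)) = 0"
      proof -
        show "Md (tD T (G - p)) = 3*(G - p) - 1" using 4 G by (auto simp: Md_tD)
        show "good (2 * int (G - p) - 1) (tD T (G - p))" by (rule good_tD)
        show "lam (2 * int (G - p) - 1) (tD T (G - p)) = 0" by (rule lam_tD)
      qed
      have i2: "Md (sD T p) = 3*p - 1" "good (2 * int p - 1) (sD T p)"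
        using IH[of p] 4 G by auto
      have "good (2 * int p - 1 + (2 * int (G - p) - 1)) (mulD T (sD T p) (tD T (G - p)))" by (rule good_mul[OF i2(2) i1(2)])
      moreover have "lam (2 * int p - 1 + (2 * int (G - p) - 1)) (mulD T (sD T p) (tD T (G - p))) = 0"
        unfolding lam_mul[OF i2(2) i1(2)] i1(3) by simp
      moreover have "2 * int p - 1 + (2 * int (G - p) - 1) = 2 * int g + 2" using 4 G by auto
      moreover have "Md (mulD T (sD T p) (tD T (G - p))) \<le> 3*g+4" using i1(1) i2(1) 4 G by auto
      ultimately show ?thesis using 4 G by (simp add: ac_simps)
    qed
  qed
  have M: "Md (sumD T (3*g+4) (sL T g)) = 3*g+4" by (rule Md_sumD) (use el in blast)
  have Gd: "good (2 * int g + 2) (sumD T (3*g+4) (sL T g))" by (rule good_sumD) (use el in auto)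
  have L: "lam (2 * int g + 2) (sumD T (3*g+4) (sL T g)) = 0"
  proof -
    have "lam (2 * int g + 2) (sumD T (3*g+4) (sL T g)) = (\<Sum>X\<leftarrow>sL T g. lam (2 * int g + 2) X)"
      by (rule lam_sumD) (use el in blast)
    also have "\<dots> = 0" by (rule sum_list_map_zero) (use el in blast)
    finally show ?thesis .
  qed
  have "good (2 * int g + 2 + 1) (sD T G)" unfolding G sD_SS by (rule good_divy[OF Gd])
  moreover have "lam (2 * int g + 2 + 1) (sD T G) = 0" unfolding G sD_SS lam_divy by (rule L)
  ultimately show ?case using M G by (simp add: sD_SS algebra_simps)
qed

lemma sum_two_pts:
  fixes f :: "nat \<Rightarrow> complex"
  assumes "\<And>b. b \<in> {0..g} \<Longrightarrow> b \<noteq> p \<Longrightarrow> b + 2 \<noteq> p \<Longrightarrow> f b = 0"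
  shows "(\<Sum>a\<in>{0..g}. f a) = (if p \<le> g then f p else 0) + (if 2 \<le> p \<and> p - 2 \<le> g then f (p - 2) else 0)"
proof -
  have "(\<Sum>a\<in>{0..g}. f a) = (\<Sum>a\<in>{0..g}. (if a = p then f a else 0) + (if a = p - 2 \<and> 2 \<le> p then f a else 0))"
  proof (rule sum.cong[OF refl])
    fix a assume a: "a \<in> {0..g}"
    show "f a = (if a = p then f a else 0) + (if a = p - 2 \<and> 2 \<le> p then f a else 0)"
      using assms[OF a] by (cases "a = p"; cases "a = p - 2 \<and> 2 \<le> p") auto
  qed
  also have "\<dots> = (\<Sum>a\<in>{0..g}. if a = p then f a else 0) + (\<Sum>a\<in>{0..g}. if a = p - 2 \<and> 2 \<le> p then f a else 0)"
    by (rule sum.distrib)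
  also have "(\<Sum>a\<in>{0..g}. if a = p then f a else 0) = (if p \<le> g then f p else 0)"
    by (simp add: sum.delta')
  also have "(\<Sum>a\<in>{0..g}. if a = p - 2 \<and> 2 \<le> p then f a else 0) = (if 2 \<le> p \<and> p - 2 \<le> g then f (p - 2) else 0)"
  proof (cases "2 \<le> p")
    case True then show ?thesis by (simp add: sum.delta')
  qed simp
  finally show ?thesis .
qed

context fixes T :: real and W assumes T: "0 < T" and LF: "loop_family T W"
begin

lemma s_eq: "2 \<le> G \<Longrightarrow> x \<in> Ucut T \<Longrightarrow> W G 1 (G - 2) [x] = ev T (sD T G) x"
proof (induction G arbitrary: x rule: less_induct)
  case (less G)
  note x = less.prems(2)
  obtain g where G: "G = Suc (Suc g)" using less.prems by (metis add_2_eq_Suc le_Suc_ex)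
  have IH: "\<And>p t. 2 \<le> p \<Longrightarrow> p < G \<Longrightarrow> t \<in> Ucut T \<Longrightarrow> W p 1 (p - 2) [t] = ev T (sD T p) t"
    using less.IH by blast
  have y0: "ybr T x \<noteq> 0" by (rule ybr_nz[OF T x])
  have loop: "ybr T x * W G 1 g [x] = RHS T W G 1 g x []"
    by (rule LF_loop[OF LF]) (use G x in auto)
  have A: "(if 1 \<le> G \<and> 1 \<le> g then deriv (\<lambda>t. W (G - 1) 1 (g - 1) [t]) x else 0)
      = (if g = 0 then 0 else ev T (ddD T (sD T (Suc g))) x)"
  proof (cases "g = 0")
    case False
    have "deriv (\<lambda>t. W (Suc g) 1 (g - 1) [t]) x = ev T (ddD T (sD T (Suc g))) x"
    proof (rule ev_eq_deriv[OF T x])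
      fix t assume "t \<in> Ucut T"
      then show "W (Suc g) 1 (g - 1) [t] = ev T (sD T (Suc g)) t"
        using IH[of "Suc g" t] False G by auto
    qed
    then show ?thesis using False G by simp
  qed simp
  have B: "(if 2 \<le> G then W (G - 2) 2 g [x, x] else 0) = ev T (Dd T g) x"
    using D_eq[OF T LF x, of g] ev_Dd[OF T x, of g] G by simp
  have inner: "(\<Sum>a\<in>{0..g}. W p 1 a [x] * W (G - p) 1 (g - a) [x])
     = (if p \<le> g then ev T (tD T p) x * ev T (sD T (G - p)) x else 0)
     + (if 2 \<le> p then ev T (sD T p) x * ev T (tD T (G - p)) x else 0)"
    if p: "p \<in> {1..<G}" for p
  proof -
    have "(\<Sum>a\<in>{0..g}. W p 1 a [x] * W (G - p) 1 (g - a) [x])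
      = (if p \<le> g then W p 1 p [x] * W (G - p) 1 (g - p) [x] else 0)
       + (if 2 \<le> p \<and> p - 2 \<le> g then W p 1 (p - 2) [x] * W (G - p) 1 (g - (p - 2)) [x] else 0)"
    proof (rule sum_two_pts)
      fix b assume b: "b \<in> {0..g}" "b \<noteq> p" "b + 2 \<noteq> p"
      show "W p 1 b [x] * W (G - p) 1 (g - b) [x] = 0"
      proof (cases "p < b \<or> odd (p + b)")
        case True then show ?thesis using W1z[OF T LF, of p b x] x by (simp add: Zc_def)
      next
        case False
        have "b \<le> g" "1 \<le> p" "p < G" "\<not> p < b" "even (p + b)" "b \<noteq> p" "b + 2 \<noteq> p" using b p False by auto
        then have "G - p < g - b" using G by presburger
        then show ?thesis using W1z[OF T LF, of "G - p" "g - b" x] x by (simp add: Zc_def)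
      qed
    qed
    also have "\<dots> = (if p \<le> g then ev T (tD T p) x * ev T (sD T (G - p)) x else 0)
     + (if 2 \<le> p then ev T (sD T p) x * ev T (tD T (G - p)) x else 0)"
    proof -
      have a1: "p \<le> g \<Longrightarrow> W p 1 p [x] * W (G - p) 1 (g - p) [x] = ev T (tD T p) x * ev T (sD T (G - p)) x"
        using t_eq[OF T LF x, of p] IH[of "G - p" x] p G x by auto
      have a2: "2 \<le> p \<Longrightarrow> W p 1 (p - 2) [x] * W (G - p) 1 (g - (p - 2)) [x] = ev T (sD T p) x * ev T (tD T (G - p)) x"
      proof -
        assume p2: "2 \<le> p"
        have "g - (p - 2) = G - p" using p2 p G by auto
        then show ?thesis using t_eq[OF T LF x, of "G - p"] IH[of p x] p p2 G x by auto
      qed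
      have a3: "2 \<le> p \<Longrightarrow> p - 2 \<le> g" using p G by auto
      show ?thesis using a1 a2 a3 by auto
    qed
    finally show ?thesis .
  qed
  have C: "(\<Sum>p\<in>{0..G}. if p = 0 \<or> p = G then 0 else (\<Sum>a\<in>{0..g}. W p 1 a [x] * W (G - p) 1 (g - a) [x]))
      = (\<Sum>p\<in>{1..<Suc g}. ev T (tD T p) x * ev T (sD T (G - p)) x)
      + (\<Sum>p\<in>{2..<G}. ev T (sD T p) x * ev T (tD T (G - p)) x)"
  proof -
    have "(\<Sum>p\<in>{0..G}. if p = 0 \<or> p = G then 0 else (\<Sum>a\<in>{0..g}. W p 1 a [x] * W (G - p) 1 (g - a) [x]))
       = (\<Sum>p\<in>{1..<G}. (if p \<le> g then ev T (tD T p) x * ev T (sD T (G - p)) x else 0)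
          + (if 2 \<le> p then ev T (sD T p) x * ev T (tD T (G - p)) x else 0))"
      unfolding sum_mid by (rule sum.cong[OF refl inner])
    also have "\<dots> = (\<Sum>p\<in>{1..<G}. if p \<le> g then ev T (tD T p) x * ev T (sD T (G - p)) x else 0)
          + (\<Sum>p\<in>{1..<G}. if 2 \<le> p then ev T (sD T p) x * ev T (tD T (G - p)) x else 0)"
      by (rule sum.distrib)
    also have "(\<Sum>p\<in>{1..<G}. if p \<le> g then ev T (tD T p) x * ev T (sD T (G - p)) x else 0)
        = (\<Sum>p\<in>{1..<Suc g}. ev T (tD T p) x * ev T (sD T (G - p)) x)"
      by (rule sum.mono_neutral_cong_right) (use G in auto)
    also have "(\<Sum>p\<in>{1..<G}. if 2 \<le> p then ev T (sD T p) x * ev T (tD T (G - p)) x else 0)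
        = (\<Sum>p\<in>{2..<G}. ev T (sD T p) x * ev T (tD T (G - p)) x)"
      by (rule sum.mono_neutral_cong_right) (use G in auto)
    finally show ?thesis .
  qed
  have Mb: "\<And>X. X \<in> set (sL T g) \<Longrightarrow> Md X \<le> 3*g+4"
  proof -
    fix X assume X: "X \<in> set (sL T g)"
    consider "g \<noteq> 0" "X = ddD T (sD T (Suc g))" | "X = Dd T g"
      | p where "p \<in> {1..<Suc g}" "X = mulD T (tD T p) (sD T (Suc (Suc g) - p))"
      | p where "p \<in> {2..<Suc (Suc g)}" "X = mulD T (sD T p) (tD T (Suc (Suc g) - p))"
      using X by (auto split: if_splits simp del: upt_Suc)
    then show "Md X \<le> 3*g+4"
    proof cases
      case 1 then show ?thesis using sD_props[of "Suc g" T] Md_dd_le[of T "sD T (Suc g)"] by simp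
    next
      case 2 then show ?thesis using Dd_props[of g T] by simp
    next
      case (3 p) then show ?thesis using sD_props[of "Suc (Suc g) - p" T] by (auto simp: Md_tD)
    next
      case (4 p) then show ?thesis using sD_props[of p T] by (auto simp: Md_tD)
    qed
  qed
  have "ybr T x * W G 1 (G - 2) [x] = RHS T W G 1 g x []" using loop G by simp
  also have "\<dots> = (if g = 0 then 0 else ev T (ddD T (sD T (Suc g))) x) + ev T (Dd T g) x
      + ((\<Sum>p\<in>{1..<Suc g}. ev T (tD T p) x * ev T (sD T (G - p)) x)
      + (\<Sum>p\<in>{2..<G}. ev T (sD T p) x * ev T (tD T (G - p)) x))"
    unfolding RHS1[OF T LF x] A B C by simp
  also have "\<dots> = ev T (sumD T (3*g+4) (sL T g)) x"
    by (subst ev_sumD[OF T x Mb]) (simp_all add: G ev_mul[OF T x] sum_set_upt_conv_sum_list_nat[symmetric] comp_def del: upt_Suc)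
  finally show ?case using y0 unfolding G sD_SS ev_divy[OF T x] by (simp add: field_simps)
qed

end

lemma par_poly_neg: assumes "par p (int a)" shows "poly p (- x) = (-1) ^ a * poly p x"
proof -
  have "poly p (- x) = (\<Sum>i\<le>degree p. coeff p i * (- x) ^ i)" by (simp add: poly_altdef)
  also have "\<dots> = (\<Sum>i\<le>degree p. (-1) ^ a * (coeff p i * x ^ i))"
  proof (rule sum.cong[OF refl])
    fix i
    show "coeff p i * (- x) ^ i = (-1) ^ a * (coeff p i * x ^ i)"
    proof (cases "coeff p i = 0")
      case False
      then have "even (int i + int a)" using assms by (auto simp: par_def)
      then have "even (i + a)" by presburger
      then have "(-1 :: complex) ^ i = (-1) ^ a" by (metis neg_one_even_power neg_one_odd_power odd_add)
      then show ?thesis by (simp add: power_minus[of x])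
    qed simp
  qed
  also have "\<dots> = (-1) ^ a * poly p x" by (simp add: poly_altdef sum_distrib_left)
  finally show ?thesis .
qed

theorem theorem1:
  fixes T :: real and g :: nat
    and W :: "nat \<Rightarrow> nat \<Rightarrow> nat \<Rightarrow> complex list \<Rightarrow> complex"
  assumes "0 < T" and "loop_family T W" and "3 \<le> g"
  shows "\<exists>C D :: complex poly.
           (\<forall>x \<in> Ucut T. W g 1 (g - 2) [x]
              = poly C x / ybr T x ^ (3 * g - 2) + poly D x / ybr T x ^ (3 * g - 1))
         \<and> degree C \<le> g - 1 \<and> degree D \<le> g
         \<and> (\<forall>x. poly C (- x) = (-1) ^ (g - 1) * poly C x)
         \<and> (\<forall>x. poly D (- x) = (-1) ^ g * poly D x)
         \<and> coeff C (g - 1) = - coeff D g"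
proof -
  note T = assms(1) and LF = assms(2) and g3 = assms(3)
  obtain A B M where S: "sD T g = (A, B, M)" by (cases "sD T g") auto
  have P: "Md (sD T g) = 3*g - 1" "good (2 * int g - 1) (sD T g)" "lam (2 * int g - 1) (sD T g) = 0"
    using sD_props[of g T] g3 by auto
  have M: "M = 3*g - 1" using P(1) S by simp
  have sM: "int M - (2 * int g - 1) = int g" using M g3 by auto
  have h: "dle A (int g)" "dle B (int g - 1)" "par A (int g)" "par B (int g + 1)"
    using P(2) unfolding S good.simps sM by auto
  have l: "coeff (A + [:0,1:] * B) g = 0" using P(3) unfolding S lam.simps sM by simp
  have c1: "\<forall>x \<in> Ucut T. W g 1 (g - 2) [x] = poly B x / ybr T x ^ (3 * g - 2) + poly A x / ybr T x ^ (3 * g - 1)"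
  proof
    fix x assume x: "x \<in> Ucut T"
    have y0: "ybr T x \<noteq> 0" by (rule ybr_nz[OF T x])
    have e: "3 * g - 1 = Suc (3 * g - 2)" using g3 by auto
    have "W g 1 (g - 2) [x] = ev T (sD T g) x" by (rule s_eq[OF T LF]) (use g3 x in auto)
    also have "\<dots> = (poly A x + poly B x * ybr T x) / ybr T x ^ (3 * g - 1)" by (simp add: S M ev.simps)
    also have "\<dots> = poly B x / ybr T x ^ (3 * g - 2) + poly A x / ybr T x ^ (3 * g - 1)"
      unfolding e using y0 by (simp add: field_simps)
    finally show "W g 1 (g - 2) [x] = poly B x / ybr T x ^ (3 * g - 2) + poly A x / ybr T x ^ (3 * g - 1)" .
  qed
  have c2: "degree B \<le> g - 1" using h(2) g3 by (auto simp: dle_def)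
  have c3: "degree A \<le> g" using h(1) by (auto simp: dle_def)
  have c4: "\<forall>x. poly B (- x) = (-1) ^ (g - 1) * poly B x"
  proof
    fix x
    have "par B (int (g - 1))" by (rule par_cong[OF h(4)]) (use g3 in \<open>simp add: of_nat_diff\<close>)
    then show "poly B (- x) = (-1) ^ (g - 1) * poly B x" by (rule par_poly_neg)
  qed
  have c5: "\<forall>x. poly A (- x) = (-1) ^ g * poly A x" using par_poly_neg[OF h(3)] by blast
  have c6: "coeff B (g - 1) = - coeff A g"
  proof -
    obtain k where k: "g = Suc k" using g3 by (cases g) auto
    have "coeff (A + [:0,1:] * B) g = coeff A g + coeff B (g - 1)"
      unfolding k by simp
    then show ?thesis using l by (simp add: eq_neg_iff_add_eq_0 add.commute)
  qed
  show ?thesis by (intro exI[of _ B] exI[of _ A]) (use c1 c2 c3 c4 c5 c6 in blast)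
qed

end
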